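(* Let $X \subset \mathbb P^3_k$ be a K3 quartic surface and $P$ a singular point of $X$. Choose coordinates with $P = [0:0:0:1]$ so that $X$ is given by $$ x_3^2 f_2(x_0,x_1,x_2) + x_3 f_3(x_0,x_1,x_2) + f_4(x_0,x_1,x_2) = 0,$$ with $f_i$ homogeneous of degree $i$ (the second, third and fourth Taylor coefficients of $X$ at $P$). Then at most $8$ lines contained in $X$ pass through $P$. Moreover, if more than $6$ lines of $X$ pass through $P$, then $f_2$ and $f_3$ have a common (nonconstant) factor; and if exactly $8$ lines of $X$ pass through $P$, then $f_2$ divides $f_3$.
   Context: $k$ is an algebraically closed field of characteristic $\neq 2,3$. A K3 quartic surface is a surface $X \subset \mathbb P^3_k$ of degree 4 whose only singularities are isolated rational double points; in particular $f_2 \not\equiv 0$ at any singular point. *)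

theory Defs
  imports "HOL-Computational_Algebra.Polynomial"
begin

text \<open>Polynomials in x0,x1,x2 over k: nested univariate polynomials
  k[x2][x1][x0], i.e. type k poly poly poly (outer variable x0, middle x1,
  innermost x2).  Quartic forms in x0..x3: k[x2][x1][x0][x3],
  i.e. type k poly poly poly poly with outermost variable x3.\<close>

type_synonym 'k pol3 = "'k poly poly poly"
type_synonym 'k pol4 = "'k poly poly poly poly"
type_synonym 'k pt = "'k \<times> 'k \<times> 'k \<times> 'k"

definition mcoeff3 :: "'k::zero pol3 \<Rightarrow> nat \<Rightarrow> nat \<Rightarrow> nat \<Rightarrow> 'k" where
  "mcoeff3 p i j l = coeff (coeff (coeff p i) j) l"

definition homogeneous3 :: "nat \<Rightarrow> 'k::zero pol3 \<Rightarrow> bool" where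
  "homogeneous3 d p \<longleftrightarrow> (\<forall>i j l. mcoeff3 p i j l \<noteq> 0 \<longrightarrow> i + j + l = d)"

definition eval3 :: "'k::comm_semiring_1 pol3 \<Rightarrow> 'k \<Rightarrow> 'k \<Rightarrow> 'k \<Rightarrow> 'k" where
  "eval3 p x0 x1 x2 = poly (poly (poly p [:[:x0:]:]) [:x1:]) x2"

definition eval4 :: "'k::comm_semiring_1 pol4 \<Rightarrow> 'k pt \<Rightarrow> 'k" where
  "eval4 F w = (case w of (x0, x1, x2, x3) \<Rightarrow> eval3 (poly F [:[:[:x3:]:]:]) x0 x1 x2)"

definition pdiff :: "nat \<Rightarrow> 'k::idom pol4 \<Rightarrow> 'k pol4" where
  "pdiff i F = (if i = 0 then map_poly pderiv F
     else if i = 1 then map_poly (map_poly pderiv) F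
     else if i = 2 then map_poly (map_poly (map_poly pderiv)) F
     else pderiv F)"

text \<open>Singular points of X = V(F) \<subseteq> P^3, as nonzero representative vectors.\<close>
definition sing_vecs :: "'k::idom pol4 \<Rightarrow> 'k pt set" where
  "sing_vecs F = {w. w \<noteq> (0, 0, 0, 0) \<and> eval4 F w = 0 \<and> (\<forall>i\<le>3. eval4 (pdiff i F) w = 0)}"

definition smul :: "'k::times \<Rightarrow> 'k pt \<Rightarrow> 'k pt" where
  "smul c w = (case w of (a, b, d, e) \<Rightarrow> (c * a, c * b, c * d, c * e))"

text \<open>The singular locus of X consists of finitely many points of P^3
  (i.e. the singularities are isolated, X being a surface).\<close>
definition finite_sing :: "'k::idom pol4 \<Rightarrow> bool" where
  "finite_sing F \<longleftrightarrow> (\<exists>S. finite S \<and> (\<forall>w\<in>sing_vecs F. \<exists>s\<in>S. \<exists>c. w = smul c s))"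

text \<open>A singular point is a double point: some second partial derivative
  does not vanish there (multiplicity exactly 2; char k \<noteq> 2).\<close>
definition double_point :: "'k::idom pol4 \<Rightarrow> 'k pt \<Rightarrow> bool" where
  "double_point F w \<longleftrightarrow> (\<exists>i\<le>3. \<exists>j\<le>3. eval4 (pdiff i (pdiff j F)) w \<noteq> 0)"

definition lin_comb :: "'k::idom \<Rightarrow> 'k pt \<Rightarrow> 'k \<Rightarrow> 'k pt \<Rightarrow> 'k pt" where
  "lin_comb s u t v = (case smul s u of (a0, a1, a2, a3) \<Rightarrow>
     (case smul t v of (b0, b1, b2, b3) \<Rightarrow> (a0 + b0, a1 + b1, a2 + b2, a3 + b3)))"

definition lin_indep2 :: "'k::idom pt \<Rightarrow> 'k pt \<Rightarrow> bool" where
  "lin_indep2 u v \<longleftrightarrow> (\<forall>s t. lin_comb s u t v = (0, 0, 0, 0) \<longrightarrow> s = 0 \<and> t = 0)"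

text \<open>A line of P^3, represented by the 2-dimensional subspace of k^4 spanned by u, v.\<close>
definition span2 :: "'k::idom pt \<Rightarrow> 'k pt \<Rightarrow> 'k pt set" where
  "span2 u v = {lin_comb s u t v | s t. True}"

definition P0 :: "'k::idom pt" where "P0 = (0, 0, 0, 1)"

definition lines_through_P :: "'k::idom pol4 \<Rightarrow> 'k pt set set" where
  "lines_through_P F = {span2 P0 u | u. lin_indep2 P0 u \<and> (\<forall>w\<in>span2 P0 u. eval4 F w = 0)}"

definition quartic :: "'k::zero pol3 \<Rightarrow> 'k pol3 \<Rightarrow> 'k pol3 \<Rightarrow> 'k pol4" where
  "quartic f2 f3 f4 = [:f4, f3, f2:]"

end

theory Submission
  imports Defs
begin


lemma alg_closed_infinite: "infinite (UNIV :: 'k::alg_closed_field set)"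
proof
  assume fin: "finite (UNIV :: 'k set)"
  define p :: "'k poly" where "p = (\<Prod>a\<in>UNIV. [:-a, 1:]) + 1"
  have d: "degree (\<Prod>a\<in>(UNIV::'k set). [:-a, 1:]) = card (UNIV::'k set)"
    by (simp add: degree_prod_eq_sum_degree fin)
  have "card (UNIV::'k set) > 0" using fin by (simp add: finite_UNIV_card_ge_0)
  hence "degree p > 0" unfolding p_def using d
    by (metis degree_add_eq_left degree_1)
  then obtain x where "poly p x = 0" using alg_closed_imp_poly_has_root by blast
  moreover have "poly (\<Prod>a\<in>(UNIV::'k set). [:-a, 1:]) x = 0"
    by (simp add: poly_prod fin)
  ultimately show False by (simp add: p_def)
qed

lemma poly_inj1:
  fixes p :: "'k::alg_closed_field poly"
  assumes "\<And>x. poly p x = 0" shows "p = 0"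
proof (rule ccontr)
  assume "p \<noteq> 0"
  hence "finite {x. poly p x = 0}" by (rule poly_roots_finite)
  moreover have "{x. poly p x = 0} = UNIV" using assms by auto
  ultimately show False using alg_closed_infinite by metis
qed

lemma poly_inj1_cofinite:
  fixes p :: "'k::alg_closed_field poly"
  assumes "finite A" "\<And>x. x \<notin> A \<Longrightarrow> poly p x = 0" shows "p = 0"
proof (rule ccontr)
  assume "p \<noteq> 0"
  hence "finite {x. poly p x = 0}" by (rule poly_roots_finite)
  hence "finite ({x. poly p x = 0} \<union> A)" using assms by auto
  moreover have "{x. poly p x = 0} \<union> A = UNIV" using assms by auto
  ultimately show False using alg_closed_infinite by metis
qed

lemma coeff_poly_const:
  fixes p :: "'a::comm_ring_1 poly poly"
  shows "coeff (poly p [:b:]) n = poly (map_poly (\<lambda>q. coeff q n) p) b"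
  by (induction p) (simp_all add: map_poly_pCons)

definition e2 :: "'k::comm_ring_1 poly poly \<Rightarrow> 'k \<Rightarrow> 'k \<Rightarrow> 'k" where
  "e2 p b c = poly (poly p [:b:]) c"

lemma eval3_e2: "eval3 p a b c = e2 (poly p [:[:a:]:]) b c"
  by (simp add: eval3_def e2_def)

lemma poly_inj2:
  fixes p :: "'k::alg_closed_field poly poly"
  assumes "\<And>b c. e2 p b c = 0" shows "p = 0"
proof -
  have A: "poly p [:b:] = 0" for b
    using assms poly_inj1 unfolding e2_def by blast
  have "coeff (coeff p i) n = 0" for i n
  proof -
    have "map_poly (\<lambda>q. coeff q n) p = 0"
      by (rule poly_inj1) (metis A coeff_0 coeff_poly_const)
    hence "coeff (map_poly (\<lambda>q. coeff q n) p) i = 0" by simp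
    thus ?thesis by (simp add: coeff_map_poly)
  qed
  thus ?thesis by (metis leading_coeff_0_iff coeff_0)
qed

lemma poly_inj3:
  fixes p :: "'k::alg_closed_field pol3"
  assumes "\<And>a b c. eval3 p a b c = 0" shows "p = 0"
proof -
  have A: "poly p [:[:a:]:] = 0" for a
    using assms poly_inj2 unfolding eval3_e2 by blast
  have "coeff (coeff (coeff p i) n) m = 0" for i n m
  proof -
    have B: "poly (map_poly (\<lambda>q. coeff q n) p) [:a:] = 0" for a
      by (metis A coeff_0 coeff_poly_const)
    have "map_poly (\<lambda>q. coeff q m) (map_poly (\<lambda>q. coeff q n) p) = 0"
      by (rule poly_inj1) (metis B coeff_0 coeff_poly_const)
    hence "coeff (map_poly (\<lambda>q. coeff q m) (map_poly (\<lambda>q. coeff q n) p)) i = 0" by simp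
    thus ?thesis by (simp add: coeff_map_poly)
  qed
  thus ?thesis by (metis leading_coeff_0_iff coeff_0)
qed

lemma poly_eq3:
  fixes p q :: "'k::alg_closed_field pol3"
  assumes "\<And>a b c. eval3 p a b c = eval3 q a b c" shows "p = q"
proof -
  have "p - q = 0" by (rule poly_inj3) (simp add: eval3_def assms[unfolded eval3_def])
  thus ?thesis by simp
qed

lemma eval3_add[simp]: "eval3 (p + q) a b c = eval3 p a b c + eval3 q a b c"
  by (simp add: eval3_def)
lemma eval3_diff[simp]: "eval3 (p - q) a b c = eval3 p a b c - eval3 (q::'k::comm_ring_1 pol3) a b c"
  by (simp add: eval3_def)
lemma eval3_minus[simp]: "eval3 (- p) a b c = - eval3 (p::'k::comm_ring_1 pol3) a b c"
  by (simp add: eval3_def)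
lemma eval3_mult[simp]: "eval3 (p * q) a b c = eval3 p a b c * eval3 q a b c"
  by (simp add: eval3_def)
lemma eval3_power[simp]: "eval3 (p ^ n) a b c = eval3 p a b c ^ n"
  by (simp add: eval3_def)
lemma eval3_0[simp]: "eval3 0 a b c = 0"
  by (simp add: eval3_def)
lemma eval3_1[simp]: "eval3 1 a b c = 1"
  by (simp add: eval3_def)
lemma eval3_sum[simp]: "eval3 (\<Sum>i\<in>A. f i) a b c = (\<Sum>i\<in>A. eval3 (f i) a b c)"
  by (simp add: eval3_def poly_sum)

definition C3 :: "'k::comm_ring_1 \<Rightarrow> 'k pol3" where "C3 x = [:[:[:x:]:]:]"
definition X0 :: "'k::comm_ring_1 pol3" where "X0 = [:0, 1:]"
definition X1 :: "'k::comm_ring_1 pol3" where "X1 = [:[:0, 1:]:]"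
definition X2 :: "'k::comm_ring_1 pol3" where "X2 = [:[:[:0, 1:]:]:]"

lemma eval3_C3[simp]: "eval3 (C3 x) a b c = x" by (simp add: eval3_def C3_def)
lemma eval3_X0[simp]: "eval3 X0 a b c = a" by (simp add: eval3_def X0_def)
lemma eval3_X1[simp]: "eval3 X1 a b c = b" by (simp add: eval3_def X1_def)
lemma eval3_X2[simp]: "eval3 X2 a b c = c" by (simp add: eval3_def X2_def)

definition bnd3 :: "'k::zero pol3 \<Rightarrow> nat \<Rightarrow> bool" where
  "bnd3 p D \<longleftrightarrow> (\<forall>i j l. mcoeff3 p i j l \<noteq> 0 \<longrightarrow> i \<le> D \<and> j \<le> D \<and> l \<le> D)"

definition msum :: "('k::zero \<Rightarrow> 'r::comm_semiring_1) \<Rightarrow> 'k pol3 \<Rightarrow> nat \<Rightarrow> 'r \<Rightarrow> 'r \<Rightarrow> 'r \<Rightarrow> 'r" where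
  "msum \<kappa> p D a b c = (\<Sum>i\<le>D. \<Sum>j\<le>D. \<Sum>l\<le>D. \<kappa> (mcoeff3 p i j l) * a ^ i * b ^ j * c ^ l)"

lemma poly_bound: fixes p :: "'a::comm_semiring_1 poly" assumes "degree p \<le> D" shows "poly p x = (\<Sum>i\<le>D. coeff p i * x ^ i)"
proof -
  have "poly p x = (\<Sum>i\<le>degree p. coeff p i * x ^ i)" by (rule poly_altdef)
  also have "\<dots> = (\<Sum>i\<le>D. coeff p i * x ^ i)"
    by (rule sum.mono_neutral_left) (use assms in \<open>auto simp: coeff_eq_0\<close>)
  finally show ?thesis .
qed

lemma bnd3_degs:
  assumes "bnd3 p D"
  shows "degree p \<le> D" "degree (coeff p i) \<le> D" "degree (coeff (coeff p i) j) \<le> D"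
proof -
  show c: "degree (coeff (coeff p i) j) \<le> D" for i j
  proof (rule degree_le, safe)
    fix l assume "D < l"
    thus "coeff (coeff (coeff p i) j) l = 0" using assms unfolding bnd3_def mcoeff3_def
      by (meson not_le)
  qed
  show b: "degree (coeff p i) \<le> D" for i
  proof (rule degree_le, safe)
    fix j assume "D < j"
    show "coeff (coeff p i) j = 0"
    proof (rule ccontr)
      assume "coeff (coeff p i) j \<noteq> 0"
      then obtain l where "coeff (coeff (coeff p i) j) l \<noteq> 0"
        by (metis leading_coeff_0_iff)
      thus False using assms \<open>D < j\<close> unfolding bnd3_def mcoeff3_def by (meson not_le)
    qed
  qed
  show "degree p \<le> D"
  proof (rule degree_le, safe)
    fix i assume "D < i"
    show "coeff p i = 0"
    proof (rule ccontr)
      assume "coeff p i \<noteq> 0"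
      then obtain j where j: "coeff (coeff p i) j \<noteq> 0"
        by (metis leading_coeff_0_iff)
      then obtain l where "coeff (coeff (coeff p i) j) l \<noteq> 0"
        by (metis leading_coeff_0_iff)
      thus False using assms \<open>D < i\<close> unfolding bnd3_def mcoeff3_def by (meson not_le)
    qed
  qed
qed

lemma poly_const_poly: "poly (q::'a::comm_ring_1 poly poly) [:b:] = (\<Sum>j\<le>D. coeff q j * [:b:] ^ j)"
  if "degree q \<le> D" using poly_bound[OF that] .

lemma eval3_expand:
  fixes p :: "'k::comm_ring_1 pol3"
  assumes "bnd3 p D"
  shows "eval3 p a b c = msum id p D a b c"
proof -
  have d: "degree p \<le> D" "\<And>i. degree (coeff p i) \<le> D" "\<And>i j. degree (coeff (coeff p i) j) \<le> D"
    using bnd3_degs[OF assms] by auto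
  have "eval3 p a b c = poly (poly (\<Sum>i\<le>D. coeff p i * [:[:a:]:] ^ i) [:b:]) c"
    unfolding eval3_def using poly_bound[OF d(1)] by simp
  also have "\<dots> = (\<Sum>i\<le>D. poly (poly (coeff p i) [:b:]) c * a ^ i)"
    by (simp add: poly_sum)
  also have "\<dots> = (\<Sum>i\<le>D. (\<Sum>j\<le>D. poly (coeff (coeff p i) j) c * b ^ j) * a ^ i)"
    by (subst poly_bound[OF d(2)]) (simp add: poly_sum)
  also have "\<dots> = (\<Sum>i\<le>D. (\<Sum>j\<le>D. (\<Sum>l\<le>D. mcoeff3 p i j l * c ^ l) * b ^ j) * a ^ i)"
    by (subst poly_bound[OF d(3)]) (simp add: mcoeff3_def)
  also have "\<dots> = msum id p D a b c"
    unfolding msum_def by (simp add: sum_distrib_left sum_distrib_right mult_ac)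
  finally show ?thesis .
qed

lemma bnd3_exists: "\<exists>D. bnd3 p D"
proof -
  define D where "D = degree p + (\<Sum>i\<le>degree p. degree (coeff p i) +
       (\<Sum>j\<le>degree (coeff p i). degree (coeff (coeff p i) j)))"
  have "bnd3 p D" unfolding bnd3_def
  proof (intro allI impI)
    fix i j l assume nz: "mcoeff3 p i j l \<noteq> 0"
    hence c1: "coeff p i \<noteq> 0" and c2: "coeff (coeff p i) j \<noteq> 0"
      by (auto simp: mcoeff3_def)
    have i: "i \<le> degree p" using c1 le_degree by blast
    have j: "j \<le> degree (coeff p i)" using c2 le_degree by blast
    have l: "l \<le> degree (coeff (coeff p i) j)" using nz le_degree by (auto simp: mcoeff3_def)
    have s1: "degree (coeff p i) + (\<Sum>j\<le>degree (coeff p i). degree (coeff (coeff p i) j))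
      \<le> (\<Sum>i\<le>degree p. degree (coeff p i) + (\<Sum>j\<le>degree (coeff p i). degree (coeff (coeff p i) j)))"
      using i by (intro member_le_sum) auto
    have s2: "degree (coeff (coeff p i) j) \<le> (\<Sum>j\<le>degree (coeff p i). degree (coeff (coeff p i) j))"
      using j by (intro member_le_sum) auto
    show "i \<le> D \<and> j \<le> D \<and> l \<le> D" using i j l s1 s2 unfolding D_def by linarith
  qed
  thus ?thesis by blast
qed

lemma bnd3_mono: "bnd3 p D \<Longrightarrow> D \<le> D' \<Longrightarrow> bnd3 p D'"
  unfolding bnd3_def by (meson le_trans)

lemma poly_msum: "poly (msum (\<lambda>x. [:x:]) p D A B C) t = msum id p D (poly A t) (poly B t) (poly C t)"
  by (simp add: msum_def poly_sum mult.assoc)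

lemma eval3_msum: "eval3 (msum C3 p D A B C) a b c = msum id p D (eval3 A a b c) (eval3 B a b c) (eval3 C a b c)"
  by (simp add: msum_def)


type_synonym 'k v3 = "'k \<times> 'k \<times> 'k"
type_synonym 'k m3 = "'k v3 \<times> 'k v3 \<times> 'k v3"

definition ev :: "'k::comm_ring_1 pol3 \<Rightarrow> 'k v3 \<Rightarrow> 'k" where
  "ev p x = (case x of (a, b, c) \<Rightarrow> eval3 p a b c)"
lemma ev_simp[simp]: "ev p (a, b, c) = eval3 p a b c" by (simp add: ev_def)

definition dot :: "'k::comm_ring_1 v3 \<Rightarrow> 'k v3 \<Rightarrow> 'k" where
  "dot l x = (case l of (l0, l1, l2) \<Rightarrow> case x of (x0, x1, x2) \<Rightarrow> l0 * x0 + l1 * x1 + l2 * x2)"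
lemma dot_simp[simp]: "dot (l0, l1, l2) (x0, x1, x2) = l0 * x0 + l1 * x1 + l2 * x2"
  by (simp add: dot_def)

definition sc :: "'k::comm_ring_1 \<Rightarrow> 'k v3 \<Rightarrow> 'k v3" where
  "sc t x = (case x of (a, b, c) \<Rightarrow> (t * a, t * b, t * c))"
lemma sc_simp[simp]: "sc t (a, b, c) = (t * a, t * b, t * c)" by (simp add: sc_def)

definition vadd :: "'k::comm_ring_1 v3 \<Rightarrow> 'k v3 \<Rightarrow> 'k v3" where
  "vadd x y = (case x of (a, b, c) \<Rightarrow> case y of (d, e, f) \<Rightarrow> (a + d, b + e, c + f))"
lemma vadd_simp[simp]: "vadd (a, b, c) (d, e, f) = (a + d, b + e, c + f)" by (simp add: vadd_def)

definition appl :: "'k::comm_ring_1 m3 \<Rightarrow> 'k v3 \<Rightarrow> 'k v3" where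
  "appl M x = (case M of (r0, r1, r2) \<Rightarrow> (dot r0 x, dot r1 x, dot r2 x))"
lemma appl_simp[simp]: "appl (r0, r1, r2) x = (dot r0 x, dot r1 x, dot r2 x)" by (simp add: appl_def)

definition lin3 :: "'k::comm_ring_1 v3 \<Rightarrow> 'k pol3" where
  "lin3 l = (case l of (l0, l1, l2) \<Rightarrow> C3 l0 * X0 + C3 l1 * X1 + C3 l2 * X2)"
lemma eval3_lin3[simp]: "eval3 (lin3 l) a b c = dot l (a, b, c)"
  by (cases l) (simp add: lin3_def)
lemma ev_lin3[simp]: "ev (lin3 l) x = dot l x"
  by (cases l; cases x) (simp add: lin3_def)

definition prop3 :: "'k::comm_ring_1 v3 \<Rightarrow> 'k v3 \<Rightarrow> bool" where
  "prop3 x y \<longleftrightarrow> (\<exists>t. y = sc t x)"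

definition sub :: "'k::comm_ring_1 m3 \<Rightarrow> 'k pol3 \<Rightarrow> 'k pol3" where
  "sub M p = (case M of (r0, r1, r2) \<Rightarrow> msum C3 p (SOME D. bnd3 p D) (lin3 r0) (lin3 r1) (lin3 r2))"

lemma ev_sub: "ev (sub M p) x = ev p (appl M x)"
proof -
  obtain r0 r1 r2 where M: "M = (r0, r1, r2)" by (cases M) auto
  obtain a b c where x: "x = (a, b, c)" by (cases x) auto
  have D: "bnd3 p (SOME D. bnd3 p D)" using bnd3_exists someI_ex by metis
  show ?thesis unfolding M x
    by (simp add: sub_def eval3_msum eval3_expand[OF D])
qed

lemma ev_eqI:
  fixes p q :: "'k::alg_closed_field pol3"
  assumes "\<And>x. ev p x = ev q x" shows "p = q"
  by (rule poly_eq3) (use assms[of "(_, _, _)"] in simp)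

lemma ev_add[simp]: "ev (p + q) x = ev p x + ev q x" by (cases x) simp
lemma ev_diff[simp]: "ev (p - q) x = ev p x - ev q x" by (cases x) simp
lemma ev_mult[simp]: "ev (p * q) x = ev p x * ev q x" by (cases x) simp
lemma ev_C3[simp]: "ev (C3 c) x = c" by (cases x) simp

lemma homog_bnd: "homogeneous3 d p \<Longrightarrow> bnd3 p d"
  unfolding homogeneous3_def bnd3_def by fastforce

lemma homog_scale:
  fixes p :: "'k::comm_ring_1 pol3"
  assumes "homogeneous3 d p"
  shows "ev p (sc t x) = t ^ d * ev p x"
proof -
  obtain a b c where x: "x = (a, b, c)" by (cases x) auto
  have B: "bnd3 p d" using assms by (rule homog_bnd)
  have "msum id p d (t * a) (t * b) (t * c) = t ^ d * msum id p d a b c"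
    unfolding msum_def sum_distrib_left
  proof (intro sum.cong refl)
    fix i j l
    show "id (mcoeff3 p i j l) * (t * a) ^ i * (t * b) ^ j * (t * c) ^ l =
          t ^ d * (id (mcoeff3 p i j l) * a ^ i * b ^ j * c ^ l)"
    proof (cases "mcoeff3 p i j l = 0")
      case False
      hence "i + j + l = d" using assms by (auto simp: homogeneous3_def)
      hence "t ^ d = t ^ i * t ^ j * t ^ l" by (metis power_add)
      thus ?thesis by (simp add: power_mult_distrib mult_ac)
    qed simp
  qed
  thus ?thesis unfolding x by (simp add: eval3_expand[OF B])
qed


lemma coeff_mult_bound:
  fixes p q :: "'a::comm_semiring_1 poly"
  assumes "degree p \<le> a" "degree q \<le> b"
  shows "coeff (p * q) (a + b) = coeff p a * coeff q b"
proof -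
  have "coeff (p * q) (a + b) = (\<Sum>i\<le>a + b. coeff p i * coeff q (a + b - i))"
    by (rule coeff_mult)
  also have "\<dots> = (\<Sum>i\<in>{a}. coeff p i * coeff q (a + b - i))"
  proof (rule sum.mono_neutral_right)
    show "\<forall>i\<in>{..a + b} - {a}. coeff p i * coeff q (a + b - i) = 0"
    proof
      fix i assume i: "i \<in> {..a + b} - {a}"
      show "coeff p i * coeff q (a + b - i) = 0"
      proof (cases "i < a")
        case True
        hence "degree q < a + b - i" using assms by linarith
        thus ?thesis by (simp add: coeff_eq_0)
      next
        case False
        hence "degree p < i" using assms i by auto
        thus ?thesis by (simp add: coeff_eq_0)
      qed
    qed
  qed auto
  finally show ?thesis by simp
qed

lemma degree_power_bound:
  fixes L :: "'a::comm_semiring_1 poly"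
  assumes "degree L \<le> e" shows "degree (L ^ i) \<le> e * i"
  by (meson assms degree_power_le le_trans mult_le_mono1)

lemma coeff_power_bound:
  fixes L :: "'a::comm_semiring_1 poly"
  assumes "degree L \<le> e" shows "coeff (L ^ i) (e * i) = coeff L e ^ i"
proof (induction i)
  case (Suc i)
  have "coeff (L ^ Suc i) (e * Suc i) = coeff (L * L ^ i) (e + e * i)" by simp
  also have "\<dots> = coeff L e * coeff (L ^ i) (e * i)"
    by (rule coeff_mult_bound[OF assms degree_power_bound[OF assms]])
  finally show ?case using Suc by simp
qed simp

lemma RDL:
  fixes g :: "'k::comm_ring_1 pol3" and LA LB LC :: "'k poly"
  assumes h: "homogeneous3 d g" and d0: "degree LA \<le> e" and d1: "degree LB \<le> e" and d2: "degree LC \<le> e"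
  shows "degree (msum (\<lambda>x. [:x:]) g d LA LB LC) \<le> d * e"
    and "coeff (msum (\<lambda>x. [:x:]) g d LA LB LC) (d * e) = eval3 g (coeff LA e) (coeff LB e) (coeff LC e)"
    and "\<And>t. poly (msum (\<lambda>x. [:x:]) g d LA LB LC) t = eval3 g (poly LA t) (poly LB t) (poly LC t)"
proof -
  have B: "bnd3 g d" using h by (rule homog_bnd)
  show "poly (msum (\<lambda>x. [:x:]) g d LA LB LC) t = eval3 g (poly LA t) (poly LB t) (poly LC t)" for t
    unfolding poly_msum eval3_expand[OF B] by simp
  have tm: "degree ([:mcoeff3 g i j l:] * LA ^ i * LB ^ j * LC ^ l) \<le> d * e \<and>
     coeff ([:mcoeff3 g i j l:] * LA ^ i * LB ^ j * LC ^ l) (d * e) =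
       mcoeff3 g i j l * coeff LA e ^ i * coeff LB e ^ j * coeff LC e ^ l" for i j l
  proof (cases "mcoeff3 g i j l = 0")
    case True thus ?thesis by simp
  next
    case False
    hence s: "i + j + l = d" using h by (auto simp: homogeneous3_def)
    have de: "d * e = e * i + e * j + e * l" using s by (metis add_mult_distrib2 mult.commute)
    have p0: "degree (LA ^ i) \<le> e * i" and p1: "degree (LB ^ j) \<le> e * j"
      and p2: "degree (LC ^ l) \<le> e * l"
      using degree_power_bound d0 d1 d2 by blast+
    have dd1: "degree (LA ^ i * LB ^ j) \<le> e * i + e * j"
      using p0 p1 degree_mult_le[of "LA ^ i" "LB ^ j"] by linarith
    have dd2: "degree (LA ^ i * LB ^ j * LC ^ l) \<le> e * i + e * j + e * l"
      using dd1 p2 degree_mult_le[of "LA ^ i * LB ^ j" "LC ^ l"] by linarith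
    have c: "coeff (LA ^ i * LB ^ j * LC ^ l) (e * i + e * j + e * l) =
        coeff LA e ^ i * coeff LB e ^ j * coeff LC e ^ l"
      by (simp add: coeff_mult_bound[OF dd1 p2] coeff_mult_bound[OF p0 p1]
          coeff_power_bound[OF d0] coeff_power_bound[OF d1] coeff_power_bound[OF d2])
    have e1: "[:mcoeff3 g i j l:] * LA ^ i * LB ^ j * LC ^ l = smult (mcoeff3 g i j l) (LA ^ i * LB ^ j * LC ^ l)"
      by (simp add: mult.assoc)
    show ?thesis unfolding e1 de using dd2 c degree_smult_le[of "mcoeff3 g i j l" "LA ^ i * LB ^ j * LC ^ l"]
      by (simp add: mult.assoc)
  qed
  show "degree (msum (\<lambda>x. [:x:]) g d LA LB LC) \<le> d * e" unfolding msum_def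
    by (intro degree_sum_le) (use tm in auto)
  show "coeff (msum (\<lambda>x. [:x:]) g d LA LB LC) (d * e) = eval3 g (coeff LA e) (coeff LB e) (coeff LC e)"
    unfolding msum_def eval3_expand[OF B] coeff_sum using tm by simp
qed

lemma bfc:
  fixes P :: "'k::field poly" and S :: "('k \<times> 'k) set"
  assumes deg: "degree P \<le> n" and fin: "finite S" and card: "card S > n"
    and nz: "\<And>s t. (s, t) \<in> S \<Longrightarrow> (s, t) \<noteq> (0, 0)"
    and np: "\<And>s t s' t'. (s, t) \<in> S \<Longrightarrow> (s', t') \<in> S \<Longrightarrow> (s, t) \<noteq> (s', t') \<Longrightarrow> s * t' \<noteq> s' * t"
    and z1: "\<And>s t. (s, t) \<in> S \<Longrightarrow> s \<noteq> 0 \<Longrightarrow> poly P (t / s) = 0"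
    and z0: "\<And>t. (0, t) \<in> S \<Longrightarrow> coeff P n = 0"
  shows "P = 0"
proof (rule ccontr)
  assume P: "P \<noteq> 0"
  define S1 where "S1 = {p \<in> S. fst p \<noteq> 0}"
  define S0 where "S0 = S - S1"
  have inj: "inj_on (\<lambda>p. snd p / fst p) S1"
  proof (rule inj_onI)
    fix x y assume x: "x \<in> S1" and y: "y \<in> S1" and e: "snd x / fst x = snd y / fst y"
    obtain s t where xx: "x = (s, t)" by (cases x)
    obtain s' t' where yy: "y = (s', t')" by (cases y)
    have "s \<noteq> 0" "s' \<noteq> 0" using x y xx yy S1_def by auto
    hence "s * t' = s' * t" using e xx yy by (simp add: field_simps)
    thus "x = y" using np x y xx yy S1_def by blast
  qed
  have sub1: "(\<lambda>p. snd p / fst p) ` S1 \<subseteq> {x. poly P x = 0}"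
    using z1 S1_def by auto
  have c1: "card S1 \<le> degree P"
  proof -
    have "card S1 = card ((\<lambda>p. snd p / fst p) ` S1)" using inj by (simp add: card_image)
    also have "\<dots> \<le> card {x. poly P x = 0}"
      using sub1 by (intro card_mono) (use poly_roots_finite P in auto)
    also have "\<dots> \<le> degree P" using P by (rule card_poly_roots_bound)
    finally show ?thesis .
  qed
  have c0: "card S0 \<le> 1"
  proof -
    have "finite S0" using fin S0_def by auto
    moreover have "\<forall>x\<in>S0. \<forall>y\<in>S0. x = y"
    proof (intro ballI)
      fix x y assume x: "x \<in> S0" and y: "y \<in> S0"
      obtain s t where xx: "x = (s, t)" by (cases x)
      obtain s' t' where yy: "y = (s', t')" by (cases y)
      have "s = 0" "s' = 0" using x y xx yy S0_def S1_def by auto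
      thus "x = y" using np[of s t s' t'] x y xx yy S0_def by auto
    qed
    ultimately show ?thesis using card_le_Suc0_iff_eq by (metis One_nat_def)
  qed
  have s1: "S1 \<subseteq> S" by (auto simp: S1_def)
  have f1: "finite S1" using fin s1 finite_subset by blast
  have "card S0 = card S - card S1" unfolding S0_def using f1 s1 by (rule card_Diff_subset)
  moreover have "card S1 \<le> card S" using s1 fin by (simp add: card_mono)
  ultimately have split: "card S = card S1 + card S0" by linarith
  show False
  proof (cases "S0 = {}")
    case True
    thus False using split c1 deg card by simp
  next
    case False
    then obtain x where "x \<in> S0" by blast
    then obtain t where "(0, t) \<in> S" using S0_def S1_def by (cases x) auto
    hence "coeff P n = 0" by (rule z0)
    hence "degree P \<noteq> n" using P by auto
    hence "degree P < n" using deg by linarith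
    thus False using split c1 c0 card by linarith
  qed
qed


lemma v3_cases: obtains a b c where "x = (a, b, c)" by (cases x) auto
lemma m3_cases: obtains m00 m01 m02 m10 m11 m12 m20 m21 m22
  where "M = ((m00, m01, m02), (m10, m11, m12), (m20, m21, m22))"
  by (metis prod.exhaust)

lemma restr_poly:
  fixes q :: "'k::comm_ring_1 pol3"
  shows "\<exists>P. \<forall>t. ev q (vadd x (sc t y)) = poly P t"
proof -
  obtain D where D: "bnd3 q D" using bnd3_exists by blast
  obtain x0 x1 x2 where x: "x = (x0, x1, x2)" by (rule v3_cases)
  obtain y0 y1 y2 where y: "y = (y0, y1, y2)" by (rule v3_cases)
  show ?thesis
    by (rule exI[of _ "msum (\<lambda>c. [:c:]) q D [:x0, y0:] [:x1, y1:] [:x2, y2:]"])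
       (simp add: x y poly_msum eval3_expand[OF D] mult.commute)
qed

lemma dens:
  fixes q :: "'k::alg_closed_field pol3"
  assumes "finite A" "\<And>t. t \<notin> A \<Longrightarrow> ev q (vadd x (sc t y)) = 0"
  shows "ev q x = 0"
proof -
  obtain P where P: "\<And>t. ev q (vadd x (sc t y)) = poly P t" using restr_poly by blast
  have "P = 0" by (rule poly_inj1_cofinite[OF assms(1)]) (use assms(2) P in auto)
  hence "ev q (vadd x (sc 0 y)) = 0" using P by simp
  thus ?thesis by (cases x; cases y) simp
qed

lemma ker_basis_gen:
  fixes l :: "'k::field v3"
  assumes "dot l b = 0" "dot l c = 0" "\<And>s t. vadd (sc s b) (sc t c) = (0, 0, 0) \<Longrightarrow> s = 0 \<and> t = 0"
    "\<And>x. dot l x = 0 \<Longrightarrow> \<exists>s t. x = vadd (sc s b) (sc t c)"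
  shows "\<exists>b c. dot l b = 0 \<and> dot l c = 0 \<and>
     (\<forall>s t. vadd (sc s b) (sc t c) = (0, 0, 0) \<longrightarrow> s = 0 \<and> t = 0) \<and>
     (\<forall>x. dot l x = 0 \<longrightarrow> (\<exists>s t. x = vadd (sc s b) (sc t c)))"
  using assms by blast

lemma ker_basis:
  fixes l :: "'k::field v3"
  assumes "l \<noteq> (0, 0, 0)"
  shows "\<exists>b c. dot l b = 0 \<and> dot l c = 0 \<and>
     (\<forall>s t. vadd (sc s b) (sc t c) = (0, 0, 0) \<longrightarrow> s = 0 \<and> t = 0) \<and>
     (\<forall>x. dot l x = 0 \<longrightarrow> (\<exists>s t. x = vadd (sc s b) (sc t c)))"
proof -
  obtain \<alpha> \<beta> \<gamma> where l: "l = (\<alpha>, \<beta>, \<gamma>)" by (rule v3_cases)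
  show ?thesis
  proof (cases "\<alpha> \<noteq> 0")
    case True
    show ?thesis
    proof (rule ker_basis_gen[of l "(-\<beta>, \<alpha>, 0)" "(-\<gamma>, 0, \<alpha>)"])
      show "dot l (-\<beta>, \<alpha>, 0) = 0" "dot l (-\<gamma>, 0, \<alpha>) = 0" by (simp_all add: l algebra_simps)
      fix s t assume "vadd (sc s (-\<beta>, \<alpha>, 0)) (sc t (-\<gamma>, 0, \<alpha>)) = (0, 0, 0)"
      thus "s = 0 \<and> t = 0" using True by auto
    next
      fix x assume x: "dot l x = 0"
      obtain x0 x1 x2 where xx: "x = (x0, x1, x2)" by (rule v3_cases)
      have "x0 = (- \<beta> * x1 - \<gamma> * x2) / \<alpha>" using x True unfolding xx l by (simp add: field_simps; algebra)
      hence "x = vadd (sc (x1 / \<alpha>) (-\<beta>, \<alpha>, 0)) (sc (x2 / \<alpha>) (-\<gamma>, 0, \<alpha>))"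
        using True unfolding xx by (simp add: field_simps)
      thus "\<exists>s t. x = vadd (sc s (-\<beta>, \<alpha>, 0)) (sc t (-\<gamma>, 0, \<alpha>))" by blast
    qed
  next
    case False
    show ?thesis
    proof (cases "\<beta> \<noteq> 0")
      case True
      show ?thesis
      proof (rule ker_basis_gen[of l "(1, 0, 0)" "(0, -\<gamma>, \<beta>)"])
        show "dot l (1, 0, 0) = 0" "dot l (0, -\<gamma>, \<beta>) = 0" using False by (simp_all add: l algebra_simps)
        fix s t assume "vadd (sc s (1, 0, 0)) (sc t (0, -\<gamma>, \<beta>)) = (0, 0, 0)"
        thus "s = 0 \<and> t = 0" using True by auto
      next
        fix x assume x: "dot l x = 0"
        obtain x0 x1 x2 where xx: "x = (x0, x1, x2)" by (rule v3_cases)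
        have "x1 = (- \<gamma> * x2) / \<beta>" using x True False unfolding xx l by (simp add: field_simps; algebra)
        hence "x = vadd (sc x0 (1, 0, 0)) (sc (x2 / \<beta>) (0, -\<gamma>, \<beta>))"
          using True unfolding xx by (simp add: field_simps)
        thus "\<exists>s t. x = vadd (sc s (1, 0, 0)) (sc t (0, -\<gamma>, \<beta>))" by blast
      qed
    next
      case False2: False
      hence g: "\<gamma> \<noteq> 0" using False assms l by auto
      show ?thesis
      proof (rule ker_basis_gen[of l "(1, 0, 0)" "(0, 1, 0)"])
        show "dot l (1, 0, 0) = 0" "dot l (0, 1, 0) = 0" using False False2 by (simp_all add: l)
        fix s t assume "vadd (sc s (1, 0, 0)) (sc t (0, 1, 0)) = (0, 0, 0)"
        thus "s = 0 \<and> t = 0" by auto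
      next
        fix x assume x: "dot l x = 0"
        obtain x0 x1 x2 where xx: "x = (x0, x1, x2)" by (rule v3_cases)
        have "x2 = 0" using x False False2 g unfolding xx l by simp
        hence "x = vadd (sc x0 (1, 0, 0)) (sc x1 (0, 1, 0))" unfolding xx by simp
        thus "\<exists>s t. x = vadd (sc s (1, 0, 0)) (sc t (0, 1, 0))" by blast
      qed
    qed
  qed
qed


lemma LL:
  fixes g :: "'k::alg_closed_field pol3" and l :: "'k v3" and T :: "'k v3 set"
  assumes l: "l \<noteq> (0, 0, 0)" and h: "homogeneous3 d g" and fin: "finite T" and card: "card T > d"
    and T: "\<And>x. x \<in> T \<Longrightarrow> x \<noteq> (0, 0, 0) \<and> dot l x = 0 \<and> ev g x = 0"
    and np: "\<And>x y. x \<in> T \<Longrightarrow> y \<in> T \<Longrightarrow> x \<noteq> y \<Longrightarrow> \<not> prop3 x y"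
  shows "\<And>x. dot l x = 0 \<Longrightarrow> ev g x = 0"
proof -
  obtain b c where b: "dot l b = 0" and c: "dot l c = 0"
    and ind: "\<And>s t. vadd (sc s b) (sc t c) = (0, 0, 0) \<Longrightarrow> s = 0 \<and> t = 0"
    and span: "\<And>x. dot l x = 0 \<Longrightarrow> \<exists>s t. x = vadd (sc s b) (sc t c)"
    using ker_basis[OF l] by blast
  obtain b0 b1 b2 where bb: "b = (b0, b1, b2)" by (rule v3_cases)
  obtain c0 c1 c2 where cc: "c = (c0, c1, c2)" by (rule v3_cases)
  define co where "co x = (SOME st. x = vadd (sc (fst st) b) (sc (snd st) c))" for x
  have co: "x = vadd (sc (fst (co x)) b) (sc (snd (co x)) c)" if dx: "dot l x = 0" for x
  proof -
    obtain s t where "x = vadd (sc s b) (sc t c)" using span[OF dx] by blast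
    hence "\<exists>st. x = vadd (sc (fst st) b) (sc (snd st) c)" by (intro exI[of _ "(s, t)"]) simp
    thus ?thesis unfolding co_def by (rule someI_ex)
  qed
  have inj: "inj_on co T"
  proof (rule inj_onI)
    fix x y assume "x \<in> T" "y \<in> T" "co x = co y"
    thus "x = y" using co T by metis
  qed
  define S where "S = co ` T"
  have finS: "finite S" using fin S_def by auto
  have cardS: "card S > d" using card inj S_def by (simp add: card_image)
  define Q where "Q = msum (\<lambda>x. [:x:]) g d [:b0, c0:] [:b1, c1:] [:b2, c2:]"
  have R: "degree Q \<le> d * 1" "coeff Q (d * 1) = eval3 g (coeff [:b0, c0:] 1) (coeff [:b1, c1:] 1) (coeff [:b2, c2:] 1)"
    "\<And>t. poly Q t = eval3 g (poly [:b0, c0:] t) (poly [:b1, c1:] t) (poly [:b2, c2:] t)"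
    unfolding Q_def using RDL[OF h, where LA="[:b0, c0:]" and LB="[:b1, c1:]" and LC="[:b2, c2:]" and e=1]
    by auto
  have R1: "degree Q \<le> d" "coeff Q d = ev g c" "\<And>t. poly Q t = ev g (vadd b (sc t c))"
    using R by (simp_all add: bb cc mult.commute)
  have key1: "ev g (vadd (sc s b) (sc t c)) = s ^ d * poly Q (t / s)" if "s \<noteq> 0" for s t
  proof -
    have "vadd (sc s b) (sc t c) = sc s (vadd b (sc (t / s) c))"
      using that by (simp add: bb cc field_simps)
    thus ?thesis using homog_scale[OF h] R1(3) by simp
  qed
  have key0: "ev g (vadd (sc 0 b) (sc t c)) = t ^ d * coeff Q d" for t
  proof -
    have "vadd (sc 0 b) (sc t c) = sc t c" by (simp add: bb cc)
    thus ?thesis using homog_scale[OF h] R1(2) by simp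
  qed
  have Q0: "Q = 0"
  proof (rule bfc[OF R1(1) finS cardS])
    fix s t assume "(s, t) \<in> S"
    then obtain x where x: "x \<in> T" "co x = (s, t)" unfolding S_def by auto
    have xe: "x = vadd (sc s b) (sc t c)" using co[of x] T[OF x(1)] x(2) by simp
    show "(s, t) \<noteq> (0, 0)" using xe T[OF x(1)] by (auto simp: bb cc)
    show "s \<noteq> 0 \<Longrightarrow> poly Q (t / s) = 0" using key1[of s t] xe T[OF x(1)] by simp
  next
    fix t assume "(0, t) \<in> S"
    then obtain x where x: "x \<in> T" "co x = (0, t)" unfolding S_def by auto
    have xe: "x = vadd (sc 0 b) (sc t c)" using co[of x] T[OF x(1)] x(2) by simp
    have "t \<noteq> 0" using xe T[OF x(1)] by (auto simp: bb cc)
    thus "coeff Q d = 0" using key0[of t] xe T[OF x(1)] by simp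
  next
    fix s t s' t' assume st: "(s, t) \<in> S" and st': "(s', t') \<in> S" and ne: "(s, t) \<noteq> (s', t')"
    obtain x where x: "x \<in> T" "co x = (s, t)" using st unfolding S_def by auto
    obtain y where y: "y \<in> T" "co y = (s', t')" using st' unfolding S_def by auto
    have xe: "x = vadd (sc s b) (sc t c)" using co[of x] T[OF x(1)] x(2) by simp
    have ye: "y = vadd (sc s' b) (sc t' c)" using co[of y] T[OF y(1)] y(2) by simp
    have xy: "x \<noteq> y" using x y ne by auto
    show "s * t' \<noteq> s' * t"
    proof
      assume cr: "s * t' = s' * t"
      have "prop3 x y"
      proof (cases "s = 0")
        case False
        have "t' = s' * t / s" using cr False by (simp add: field_simps)
        hence "y = sc (s' / s) x" using False unfolding xe ye by (simp add: bb cc field_simps)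
        thus ?thesis unfolding prop3_def by blast
      next
        case True
        have t: "t \<noteq> 0" using xe T[OF x(1)] True by (auto simp: bb cc)
        hence "s' = 0" using cr True by simp
        hence "y = sc (t' / t) x" using True t unfolding xe ye by (simp add: bb cc field_simps)
        thus ?thesis unfolding prop3_def by blast
      qed
      thus False using np x y xy by blast
    qed
  qed
  fix x assume "dot l x = 0"
  hence xe: "x = vadd (sc (fst (co x)) b) (sc (snd (co x)) c)" by (rule co)
  show "ev g x = 0"
  proof (cases "fst (co x) = 0")
    case True thus ?thesis using key0 Q0 xe by (metis coeff_0 mult_zero_right)
  next
    case False thus ?thesis using key1 Q0 xe by (metis mult_zero_right poly_0)
  qed
qed


lemma appl_sc: "appl M (sc a y) = sc a (appl M y)"
  by (cases M rule: m3_cases; cases y rule: v3_cases) (simp add: algebra_simps)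

lemma appl_zero[simp]: "appl M (0, 0, 0) = (0, 0, 0)"
  by (cases M rule: m3_cases) simp

lemma sqrt_ex: "\<exists>s::'k::alg_closed_field. s ^ 2 = x"
  using nth_root_exists[of 2 x] by auto

lemma conic_param:
  fixes y0 y1 y2 :: "'k::alg_closed_field"
  assumes "y0 ^ 2 = y1 * y2"
  shows "\<exists>s t. (y0, y1, y2) = (s * t, s ^ 2, t ^ 2)"
proof -
  obtain s where s: "s ^ 2 = y1" using sqrt_ex by blast
  show ?thesis
  proof (cases "s = 0")
    case True
    hence "y0 = 0" using assms s by simp
    moreover obtain t where "t ^ 2 = y2" using sqrt_ex by blast
    ultimately show ?thesis using True s by (intro exI[of _ s] exI[of _ t]) simp
  next
    case False
    have y1: "y1 \<noteq> 0" using s False by auto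
    have "(y0 / s) ^ 2 = y0 ^ 2 / s ^ 2" by (simp add: power_divide)
    also have "\<dots> = y1 * y2 / y1" using assms s by simp
    also have "\<dots> = y2" using y1 by simp
    finally have "(y0 / s) ^ 2 = y2" .
    thus ?thesis using False s by (intro exI[of _ s] exI[of _ "y0 / s"]) simp
  qed
qed

definition cone :: "'k::comm_ring_1 v3 \<Rightarrow> bool" where
  "cone y \<longleftrightarrow> (fst y) ^ 2 = fst (snd y) * snd (snd y)"

lemma CL:
  fixes f g :: "'k::alg_closed_field pol3" and M Mi :: "'k m3" and T :: "'k v3 set"
  assumes inv1: "\<And>x. appl M (appl Mi x) = x"
    and cn: "\<And>x. ev f x = 0 \<Longrightarrow> cone (appl Mi x)"
    and h: "homogeneous3 d g" and fin: "finite T" and card: "card T > d * 2"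
    and T: "\<And>x. x \<in> T \<Longrightarrow> x \<noteq> (0, 0, 0) \<and> ev f x = 0 \<and> ev g x = 0"
    and np: "\<And>x y. x \<in> T \<Longrightarrow> y \<in> T \<Longrightarrow> x \<noteq> y \<Longrightarrow> \<not> prop3 x y"
  shows "\<And>x. ev f x = 0 \<Longrightarrow> ev g x = 0"
proof -
  obtain m00 m01 m02 m10 m11 m12 m20 m21 m22
    where MM: "M = ((m00, m01, m02), (m10, m11, m12), (m20, m21, m22))" by (rule m3_cases)
  define co where "co x = (SOME st. appl Mi x = (fst st * snd st, fst st ^ 2, snd st ^ 2))" for x
  have co: "x = appl M (fst (co x) * snd (co x), fst (co x) ^ 2, snd (co x) ^ 2)" if fx: "ev f x = 0" for x
  proof -
    obtain y0 y1 y2 where y: "appl Mi x = (y0, y1, y2)" by (rule v3_cases)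
    have "y0 ^ 2 = y1 * y2" using cn[OF fx] y by (simp add: cone_def)
    then obtain s t where "(y0, y1, y2) = (s * t, s ^ 2, t ^ 2)" using conic_param by blast
    hence "\<exists>st. appl Mi x = (fst st * snd st, fst st ^ 2, snd st ^ 2)"
      using y by (intro exI[of _ "(s, t)"]) simp
    hence "appl Mi x = (fst (co x) * snd (co x), fst (co x) ^ 2, snd (co x) ^ 2)"
      unfolding co_def by (rule someI_ex)
    thus ?thesis using inv1[of x] by simp
  qed
  have inj: "inj_on co T"
  proof (rule inj_onI)
    fix x y assume "x \<in> T" "y \<in> T" "co x = co y"
    thus "x = y" using co T by metis
  qed
  define S where "S = co ` T"
  have finS: "finite S" using fin S_def by auto
  have cardS: "card S > d * 2" using card inj S_def by (simp add: card_image)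
  define Q where "Q = msum (\<lambda>x. [:x:]) g d [:m01, m00, m02:] [:m11, m10, m12:] [:m21, m20, m22:]"
  have R: "degree Q \<le> d * 2" "coeff Q (d * 2) = eval3 g (coeff [:m01, m00, m02:] 2) (coeff [:m11, m10, m12:] 2) (coeff [:m21, m20, m22:] 2)"
    "\<And>t. poly Q t = eval3 g (poly [:m01, m00, m02:] t) (poly [:m11, m10, m12:] t) (poly [:m21, m20, m22:] t)"
    unfolding Q_def using RDL[OF h, where LA="[:m01, m00, m02:]" and LB="[:m11, m10, m12:]" and LC="[:m21, m20, m22:]" and e=2]
    by auto
  have R1: "coeff Q (d * 2) = ev g (appl M (0, 0, 1))" "\<And>u. poly Q u = ev g (appl M (u, 1, u ^ 2))"
    using R by (simp_all add: MM algebra_simps power2_eq_square numeral_2_eq_2)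
  have key1: "ev g (appl M (s * t, s ^ 2, t ^ 2)) = (s ^ 2) ^ d * poly Q (t / s)" if "s \<noteq> 0" for s t
  proof -
    have "(s * t, s ^ 2, t ^ 2) = sc (s ^ 2) (t / s, 1, (t / s) ^ 2)"
      using that by (simp add: field_simps power2_eq_square)
    hence "appl M (s * t, s ^ 2, t ^ 2) = sc (s ^ 2) (appl M (t / s, 1, (t / s) ^ 2))"
      using appl_sc by metis
    thus ?thesis using homog_scale[OF h] R1(2) by simp
  qed
  have key0: "ev g (appl M (0 * t, 0 ^ 2, t ^ 2)) = (t ^ 2) ^ d * coeff Q (d * 2)" for t
  proof -
    have "(0 * t, (0::'k) ^ 2, t ^ 2) = sc (t ^ 2) (0, 0, 1)" by simp
    hence "appl M (0 * t, 0 ^ 2, t ^ 2) = sc (t ^ 2) (appl M (0, 0, 1))" using appl_sc by metis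
    thus ?thesis using homog_scale[OF h] R1(1) by simp
  qed
  have Q0: "Q = 0"
  proof (rule bfc[OF R(1) finS cardS])
    fix s t assume "(s, t) \<in> S"
    then obtain x where x: "x \<in> T" "co x = (s, t)" unfolding S_def by auto
    have xe: "x = appl M (s * t, s ^ 2, t ^ 2)" using co[of x] T[OF x(1)] x(2) by simp
    show "(s, t) \<noteq> (0, 0)" using xe T[OF x(1)] by auto
    show "s \<noteq> 0 \<Longrightarrow> poly Q (t / s) = 0" using key1[of s t] xe T[OF x(1)] by simp
  next
    fix t assume "(0, t) \<in> S"
    then obtain x where x: "x \<in> T" "co x = (0, t)" unfolding S_def by auto
    have xe: "x = appl M (0 * t, 0 ^ 2, t ^ 2)" using co[of x] T[OF x(1)] x(2) by simp
    have "t \<noteq> 0" using xe T[OF x(1)] by auto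
    thus "coeff Q (d * 2) = 0" using key0[of t] xe T[OF x(1)] by simp
  next
    fix s t s' t' assume st: "(s, t) \<in> S" and st': "(s', t') \<in> S" and ne: "(s, t) \<noteq> (s', t')"
    obtain x where x: "x \<in> T" "co x = (s, t)" using st unfolding S_def by auto
    obtain y where y: "y \<in> T" "co y = (s', t')" using st' unfolding S_def by auto
    have xe: "x = appl M (s * t, s ^ 2, t ^ 2)" using co[of x] T[OF x(1)] x(2) by simp
    have ye: "y = appl M (s' * t', s' ^ 2, t' ^ 2)" using co[of y] T[OF y(1)] y(2) by simp
    have xy: "x \<noteq> y" using x y ne by auto
    show "s * t' \<noteq> s' * t"
    proof
      assume cr: "s * t' = s' * t"
      have "\<exists>lam. (s' * t', s' ^ 2, t' ^ 2) = sc lam (s * t, s ^ 2, t ^ 2)"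
      proof (cases "s = 0")
        case False
        have "t' = s' * t / s" using cr False by (simp add: field_simps)
        hence "(s' * t', s' ^ 2, t' ^ 2) = sc ((s' / s) ^ 2) (s * t, s ^ 2, t ^ 2)"
          using False by (simp add: field_simps power2_eq_square)
        thus ?thesis by blast
      next
        case True
        have t: "t \<noteq> 0" using xe T[OF x(1)] True by auto
        hence "s' = 0" using cr True by simp
        hence "(s' * t', s' ^ 2, t' ^ 2) = sc ((t' / t) ^ 2) (s * t, s ^ 2, t ^ 2)"
          using True t by (simp add: field_simps power2_eq_square)
        thus ?thesis by blast
      qed
      then obtain lam where "(s' * t', s' ^ 2, t' ^ 2) = sc lam (s * t, s ^ 2, t ^ 2)" by blast
      hence "y = sc lam x" unfolding xe ye using appl_sc by metis
      hence "prop3 x y" unfolding prop3_def by blast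
      thus False using np x y xy by blast
    qed
  qed
  fix x assume fx: "ev f x = 0"
  define s where "s = fst (co x)"
  define t where "t = snd (co x)"
  have xe: "x = appl M (s * t, s ^ 2, t ^ 2)" using co[OF fx] unfolding s_def t_def .
  show "ev g x = 0"
  proof (cases "s = 0")
    case True thus ?thesis using key0[of t] Q0 xe by simp
  next
    case False thus ?thesis using key1[OF False, of t] Q0 xe by simp
  qed
qed


lemma line_matrix:
  fixes l :: "'k::field v3"
  assumes "l \<noteq> (0, 0, 0)"
  shows "\<exists>M N. (\<forall>y. appl N (appl M y) = y) \<and> (\<forall>x. appl M (appl N x) = x) \<and> (\<forall>x. fst (appl N x) = dot l x)"
proof -
  obtain \<alpha> \<beta> \<gamma> where l: "l = (\<alpha>, \<beta>, \<gamma>)" by (rule v3_cases)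
  show ?thesis
  proof (cases "\<alpha> \<noteq> 0")
    case True
    show ?thesis
      apply (rule exI[of _ "((1/\<alpha>, -\<beta>/\<alpha>, -\<gamma>/\<alpha>), (0, 1, 0), (0, 0, 1))"])
      apply (rule exI[of _ "((\<alpha>, \<beta>, \<gamma>), (0, 1, 0), (0, 0, 1))"])
      using True by (auto simp: l field_simps split: prod.splits)
  next
    case False
    show ?thesis
    proof (cases "\<beta> \<noteq> 0")
      case True
      show ?thesis
        apply (rule exI[of _ "((0, 1, 0), (1/\<beta>, 0, -\<gamma>/\<beta>), (0, 0, 1))"])
        apply (rule exI[of _ "((0, \<beta>, \<gamma>), (1, 0, 0), (0, 0, 1))"])
        using True False by (auto simp: l field_simps split: prod.splits)
    next
      case False2: False
      hence g: "\<gamma> \<noteq> 0" using False assms l by auto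
      show ?thesis
        apply (rule exI[of _ "((0, 1, 0), (0, 0, 1), (1/\<gamma>, 0, 0))"])
        apply (rule exI[of _ "((0, 0, \<gamma>), (1, 0, 0), (0, 1, 0))"])
        using g False False2 by (auto simp: l field_simps split: prod.splits)
    qed
  qed
qed

lemma eval3_at0: "eval3 p 0 b c = e2 (coeff p 0) b c"
  by (simp add: eval3_def e2_def poly_0_coeff_0)

lemma DL:
  fixes g :: "'k::alg_closed_field pol3" and l :: "'k v3"
  assumes l: "l \<noteq> (0, 0, 0)" and van: "\<And>x. dot l x = 0 \<Longrightarrow> ev g x = 0"
  shows "\<exists>q. g = lin3 l * q"
proof -
  obtain M N where NM: "\<And>y. appl N (appl M y) = y" and MN: "\<And>x. appl M (appl N x) = x"
    and Nl: "\<And>x. fst (appl N x) = dot l x"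
    using line_matrix[OF l] by blast
  define g' where "g' = sub M g"
  have "coeff g' 0 = 0"
  proof (rule poly_inj2)
    fix b c
    have "dot l (appl M (0, b, c)) = 0" using Nl[of "appl M (0, b, c)"] NM by simp
    hence "ev g' (0, b, c) = 0" unfolding g'_def ev_sub using van by blast
    thus "e2 (coeff g' 0) b c = 0" by (simp add: eval3_at0)
  qed
  hence "poly g' 0 = 0" by (simp add: poly_0_coeff_0)
  hence "[:0, 1:] dvd g'" using poly_eq_0_iff_dvd[of g' 0] by simp
  then obtain q' where q': "g' = [:0, 1:] * q'" by (elim dvdE)
  have "g = lin3 l * sub N q'"
  proof (rule ev_eqI)
    fix x
    have "ev g x = ev g' (appl N x)" unfolding g'_def ev_sub MN ..
    also have "\<dots> = fst (appl N x) * ev q' (appl N x)"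
      unfolding q' by (cases "appl N x" rule: v3_cases) (simp add: X0_def[symmetric])
    also have "\<dots> = ev (lin3 l * sub N q') x" by (simp add: Nl ev_sub)
    finally show "ev g x = ev (lin3 l * sub N q') x" .
  qed
  thus ?thesis by blast
qed


definition Nq :: "'k::comm_ring_1 pol3" where
  "Nq = [:- ([:0, 1:] * [:[:0, 1:]:]), 0, 1:]"

lemma ev_Nq[simp]: "eval3 Nq a b c = a ^ 2 - b * c"
  by (simp add: Nq_def eval3_def power2_eq_square)

lemma deg1_poly: "degree (r::'a::zero poly) \<le> 1 \<Longrightarrow> r = [:coeff r 0, coeff r 1:]"
  by (rule poly_eqI) (auto simp: coeff_pCons coeff_eq_0 split: nat.splits)

lemma eval3_lin_poly: "eval3 [:r0, r1:] a b c = e2 r0 b c + a * e2 r1 b c"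
  by (simp add: eval3_def e2_def)

lemma e2_mult: "e2 (p * q) b c = e2 p b c * e2 q b c" by (simp add: e2_def)

lemma DC:
  fixes f g :: "'k::alg_closed_field pol3" and M Mi :: "'k m3" and c :: 'k
  assumes two: "(2::'k) \<noteq> 0" and MMi: "\<And>x. appl M (appl Mi x) = x"
    and c: "c \<noteq> 0" and fM: "\<And>a b d. ev f (appl M (a, b, d)) = c * (a ^ 2 - b * d)"
    and van: "\<And>x. ev f x = 0 \<Longrightarrow> ev g x = 0"
  shows "\<exists>q. g = f * q"
proof -
  define g' where "g' = sub M g"
  have g'0: "eval3 g' (s * t) (s ^ 2) (t ^ 2) = 0" for s t
  proof -
    have "ev f (appl M (s * t, s ^ 2, t ^ 2)) = 0" using fM by (simp add: power_mult_distrib)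
    hence "ev g (appl M (s * t, s ^ 2, t ^ 2)) = 0" by (rule van)
    thus ?thesis by (simp add: g'_def ev_sub[symmetric])
  qed
  have Nnz: "Nq \<noteq> (0::'k pol3)" by (simp add: Nq_def)
  have degN: "degree (Nq::'k pol3) = 2" by (simp add: Nq_def)
  have lcN: "coeff (Nq::'k pol3) (degree Nq) = 1" unfolding degN by (simp add: Nq_def)
  obtain q r where qr: "pseudo_divmod g' Nq = (q, r)" by (cases "pseudo_divmod g' Nq") auto
  have lcN2: "coeff (Nq::'k pol3) 2 = 1" by (simp add: Nq_def numeral_2_eq_2)
  from pseudo_divmod[OF Nnz qr] have eq: "g' = Nq * q + r" and rd: "r = 0 \<or> degree r < 2"
    by (simp_all only: degN lcN2 power_one smult_1_left)
  have "degree r \<le> 1" using rd by auto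
  define r0 where "r0 = coeff r 0"
  define r1 where "r1 = coeff r 1"
  have rr: "r = [:r0, r1:]" unfolding r0_def r1_def using \<open>degree r \<le> 1\<close> by (rule deg1_poly)
  have E: "e2 r0 (s ^ 2) (t ^ 2) + s * t * e2 r1 (s ^ 2) (t ^ 2) = 0" for s t
  proof -
    have "eval3 r (s * t) (s ^ 2) (t ^ 2) = 0"
      using g'0[of s t] unfolding eq by (simp add: power_mult_distrib)
    thus ?thesis using rr by (simp add: eval3_lin_poly)
  qed
  have E0: "e2 r0 (s ^ 2) (t ^ 2) = 0" for s t
  proof -
    have "e2 r0 (s ^ 2) (t ^ 2) - s * t * e2 r1 (s ^ 2) (t ^ 2) = 0" using E[of "-s" t] by simp
    hence "2 * e2 r0 (s ^ 2) (t ^ 2) = 0" using E[of s t] by (simp add: algebra_simps)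
    thus ?thesis using two by simp
  qed
  have r00: "r0 = 0"
  proof (rule poly_inj2)
    fix u v :: 'k
    obtain s where s: "s ^ 2 = u" using sqrt_ex[of u] by (elim exE)
    obtain t where t: "t ^ 2 = v" using sqrt_ex[of v] by (elim exE)
    show "e2 r0 u v = 0" using E0[of s t] unfolding s t .
  qed
  have r10: "r1 = 0"
  proof -
    have "[:0, 1:] * [:[:0, 1:]:] * r1 = 0"
    proof (rule poly_inj2)
      fix u v :: 'k
      obtain s where s: "s ^ 2 = u" using sqrt_ex[of u] by (elim exE)
      obtain t where t: "t ^ 2 = v" using sqrt_ex[of v] by (elim exE)
      have "s * t * e2 r1 u v = 0" using E[of s t] E0[of s t] s t by simp
      moreover have "e2 ([:0, 1:] * [:[:0, 1:]:] * r1) u v = u * v * e2 r1 u v"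
        by (simp add: e2_def)
      ultimately show "e2 ([:0, 1:] * [:[:0, 1:]:] * r1) u v = 0"
        using s t by (cases "s = 0"; cases "t = 0") (auto simp: power2_eq_square)
    qed
    thus ?thesis by simp
  qed
  have "r = 0" using rr r00 r10 by simp
  hence g'N: "g' = Nq * q" using eq by simp
  have "g = f * (C3 (1 / c) * sub Mi q)"
  proof (rule ev_eqI)
    fix x
    obtain y0 y1 y2 where y: "appl Mi x = (y0, y1, y2)" by (rule v3_cases)
    have fx: "ev f x = c * (y0 ^ 2 - y1 * y2)" using fM[of y0 y1 y2] MMi[of x] y by simp
    have "ev g x = ev g' (appl Mi x)" unfolding g'_def ev_sub MMi ..
    also have "\<dots> = (y0 ^ 2 - y1 * y2) * ev q (appl Mi x)" unfolding g'N using y by simp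
    also have "\<dots> = ev (f * (C3 (1 / c) * sub Mi q)) x" using fx c by (simp add: ev_sub)
    finally show "ev g x = ev (f * (C3 (1 / c) * sub Mi q)) x" .
  qed
  thus ?thesis by blast
qed


lemma deriv_lift:
  fixes D :: "'a::comm_ring_1 \<Rightarrow> 'a"
  assumes add: "\<And>a b. D (a + b) = D a + D b" and mul: "\<And>a b. D (a * b) = D a * b + a * D b"
  shows "\<And>p q. map_poly D (p + q) = map_poly D p + map_poly D q"
    and "\<And>p q. map_poly D (p * q) = map_poly D p * q + p * map_poly D q"
proof -
  have D0: "D 0 = 0" using add[of 0 0] by simp
  show A: "map_poly D (p + q) = map_poly D p + map_poly D q" for p q
    by (intro poly_eqI) (simp add: coeff_map_poly D0 add)
  have S: "map_poly D (smult a q) = smult (D a) q + smult a (map_poly D q)" for a q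
    by (intro poly_eqI) (simp add: coeff_map_poly D0 mul)
  show "map_poly D (p * q) = map_poly D p * q + p * map_poly D q" for p q
  proof (induction p)
    case 0 thus ?case by simp
  next
    case (pCons a p)
    have "map_poly D (pCons a p * q) = map_poly D (smult a q + pCons 0 (p * q))" by simp
    also have "\<dots> = smult (D a) q + smult a (map_poly D q) + pCons 0 (map_poly D (p * q))"
      by (simp add: A S map_poly_pCons D0)
    also have "\<dots> = map_poly D (pCons a p) * q + pCons a p * map_poly D q"
      by (simp add: pCons.IH map_poly_pCons D0 algebra_simps)
    finally show ?case .
  qed
qed

lemma pderiv_leib: "pderiv ((a::'a::idom poly) * b) = pderiv a * b + a * pderiv b"
  by (simp add: pderiv_mult algebra_simps)

lemmas D1 = deriv_lift[OF pderiv_add pderiv_leib]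
lemmas D2 = deriv_lift[OF D1]
lemmas D3 = deriv_lift[OF D2]

lemma pdiff_mult:
  fixes A B :: "'k::idom pol4"
  shows "pdiff i (A * B) = pdiff i A * B + A * pdiff i B"
  unfolding pdiff_def
  by (simp add: D1(2) D2(2) D3(2) pderiv_leib)

lemma eval4_simp[simp]: "eval4 F (x0, x1, x2, x3) = eval3 (poly F (C3 x3)) x0 x1 x2"
  by (simp add: eval4_def C3_def)

lemma eval4_add: "eval4 (A + B) w = eval4 A w + eval4 B w"
  by (cases w) (simp add: eval4_def)
lemma eval4_mult: "eval4 (A * B) w = eval4 A w * eval4 B w"
  by (cases w) (simp add: eval4_def)

lemma sing_prod:
  fixes A B :: "'k::idom pol4"
  assumes "w \<noteq> (0, 0, 0, 0)" "eval4 A w = 0" "eval4 B w = 0"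
  shows "w \<in> sing_vecs (A * B)"
  using assms unfolding sing_vecs_def by (simp add: pdiff_mult eval4_add eval4_mult)

lemma eval4_quartic: "eval4 (quartic f2 f3 f4) (x0, x1, x2, x3::'k::comm_ring_1) =
   x3 ^ 2 * eval3 f2 x0 x1 x2 + x3 * eval3 f3 x0 x1 x2 + eval3 f4 x0 x1 x2"
  by (simp add: quartic_def algebra_simps power2_eq_square)

lemma smul_simp[simp]: "smul c (a, b, d, e) = (c * a, c * b, c * d, c * e)"
  by (simp add: smul_def)

lemma not_finite_sing:
  fixes F :: "'k::field pol4" and \<phi> :: "'k \<Rightarrow> 'k pt"
  assumes inf: "infinite A" and sing: "\<And>t. t \<in> A \<Longrightarrow> \<phi> t \<in> sing_vecs F"
    and np: "\<And>t t' c. t \<in> A \<Longrightarrow> t' \<in> A \<Longrightarrow> \<phi> t' = smul c (\<phi> t) \<Longrightarrow> t = t'"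
  shows "\<not> finite_sing F"
proof
  assume "finite_sing F"
  then obtain S where S: "finite S" and cov: "\<And>w. w \<in> sing_vecs F \<Longrightarrow> \<exists>s\<in>S. \<exists>c. w = smul c s"
    unfolding finite_sing_def by blast
  define ch where "ch t = (SOME s. s \<in> S \<and> (\<exists>c. \<phi> t = smul c s))" for t
  have ch: "ch t \<in> S \<and> (\<exists>c. \<phi> t = smul c (ch t))" if "t \<in> A" for t
    unfolding ch_def by (rule someI_ex) (use cov[OF sing[OF that]] in blast)
  have "inj_on ch A"
  proof (rule inj_onI)
    fix t t' assume t: "t \<in> A" and t': "t' \<in> A" and e: "ch t = ch t'"
    obtain c where c: "\<phi> t = smul c (ch t)" using ch[OF t] by blast
    obtain c' where c': "\<phi> t' = smul c' (ch t)" using ch[OF t'] e by auto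
    have nz: "\<phi> t \<noteq> (0, 0, 0, 0)" using sing[OF t] by (simp add: sing_vecs_def)
    hence "c \<noteq> 0" using c by (cases "ch t") auto
    obtain a b d f where chs: "ch t = (a, b, d, f)" by (cases "ch t") auto
    have "\<phi> t' = smul (c' / c) (\<phi> t)" using c c' \<open>c \<noteq> 0\<close> chs by simp
    thus "t = t'" using np[OF t t'] by blast
  qed
  hence "infinite (ch ` A)" using inf finite_imageD by blast
  moreover have "ch ` A \<subseteq> S" using ch by blast
  ultimately show False using S finite_subset by blast
qed


lemma ev_split: "ev p x = eval3 p (fst x) (fst (snd x)) (snd (snd x))"
  by (cases x rule: v3_cases) simp

definition ext4 :: "'k v3 \<Rightarrow> 'k \<Rightarrow> 'k pt" where
  "ext4 x z = (fst x, fst (snd x), snd (snd x), z)"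

lemma eval4_ext4: "eval4 F (ext4 x z) = ev (poly F (C3 z)) x"
  by (simp add: ext4_def ev_split)

lemma ext4_zero: "ext4 x z = (0, 0, 0, 0) \<longleftrightarrow> x = (0, 0, 0) \<and> z = 0"
  by (cases x rule: v3_cases) (auto simp: ext4_def)

lemma ext4_smul: "ext4 x' z' = smul c (ext4 x z) \<longleftrightarrow> x' = sc c x \<and> z' = c * z"
  by (cases x rule: v3_cases; cases x' rule: v3_cases) (auto simp: ext4_def)

lemma quad_root: "\<exists>z::'k::alg_closed_field. z ^ 2 + a * z + b = 0"
proof -
  have "degree [:b, a, 1:] > 0" by simp
  then obtain z where "poly [:b, a, (1::'k):] z = 0" using alg_closed_imp_poly_has_root by blast
  thus ?thesis by (intro exI[of _ z]) (simp add: algebra_simps power2_eq_square)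
qed

lemma SC:
  fixes f2 a b :: "'k::alg_closed_field pol3" and M Mi :: "'k m3" and c :: 'k
  assumes MiM: "\<And>y. appl Mi (appl M y) = y"
    and fM: "\<And>x y z. ev f2 (appl M (x, y, z)) = c * (x ^ 2 - y * z)"
  shows "\<not> finite_sing (quartic f2 (f2 * a) (f2 * b))"
proof -
  have F: "quartic f2 (f2 * a) (f2 * b) = [:f2:] * [:b, a, 1:]"
    by (simp add: quartic_def)
  define xt where "xt t = appl M (t, 1, t ^ 2)" for t :: 'k
  define zt where "zt t = (SOME z. z ^ 2 + ev a (xt t) * z + ev b (xt t) = 0)" for t
  have zt: "zt t ^ 2 + ev a (xt t) * zt t + ev b (xt t) = 0" for t
    unfolding zt_def by (rule someI_ex) (rule quad_root)
  define \<phi> where "\<phi> t = ext4 (xt t) (zt t)" for t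
  show ?thesis unfolding F
  proof (rule not_finite_sing[of UNIV \<phi>])
    show "infinite (UNIV :: 'k set)" by (rule alg_closed_infinite)
  next
    fix t :: 'k
    have nz: "xt t \<noteq> (0, 0, 0)"
    proof
      assume "xt t = (0, 0, 0)"
      hence "appl Mi (xt t) = (0, 0, 0)" by simp
      thus False using MiM[of "(t, 1, t ^ 2)"] unfolding xt_def by simp
    qed
    show "\<phi> t \<in> sing_vecs ([:f2:] * [:b, a, 1:])"
    proof (rule sing_prod)
      show "\<phi> t \<noteq> (0, 0, 0, 0)" using nz by (simp add: \<phi>_def ext4_zero)
      show "eval4 [:f2:] (\<phi> t) = 0" unfolding \<phi>_def eval4_ext4 using fM by (simp add: xt_def)
      show "eval4 [:b, a, 1:] (\<phi> t) = 0" unfolding \<phi>_def eval4_ext4 using zt[of t]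
        by (simp add: algebra_simps power2_eq_square)
    qed
  next
    fix t t' :: 'k and c' assume "\<phi> t' = smul c' (\<phi> t)"
    hence "xt t' = sc c' (xt t)" unfolding \<phi>_def ext4_smul by blast
    hence "appl Mi (xt t') = sc c' (appl Mi (xt t))" by (simp add: appl_sc)
    hence "(t', 1, t' ^ 2) = sc c' (t, 1, t ^ 2)" unfolding xt_def MiM .
    thus "t = t'" by simp
  qed
qed


lemma nonzero_dir:
  fixes l :: "'k::field v3"
  assumes "l \<noteq> (0, 0, 0)" shows "\<exists>y. dot l y \<noteq> 0"
proof -
  obtain \<alpha> \<beta> \<gamma> where l: "l = (\<alpha>, \<beta>, \<gamma>)" by (rule v3_cases)
  show ?thesis
  proof (cases "\<alpha> = 0")
    case False thus ?thesis by (intro exI[of _ "(1, 0, 0)"]) (simp add: l)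
  next
    case True
    show ?thesis
    proof (cases "\<beta> = 0")
      case False thus ?thesis using True by (intro exI[of _ "(0, 1, 0)"]) (simp add: l)
    next
      case False2: True
      hence "\<gamma> \<noteq> 0" using True assms l by auto
      thus ?thesis using True False2 by (intro exI[of _ "(0, 0, 1)"]) (simp add: l)
    qed
  qed
qed

lemma dot_vadd: "dot l (vadd x y) = dot l x + dot l y"
  by (cases l rule: v3_cases; cases x rule: v3_cases; cases y rule: v3_cases) (simp add: algebra_simps)
lemma dot_sc: "dot l (sc t x) = t * dot l x"
  by (cases l rule: v3_cases; cases x rule: v3_cases) (simp add: algebra_simps)
lemma vadd_sc_sc: "vadd (sc u x) (sc t (sc u y)) = sc u (vadd x (sc t y))"
  by (cases x rule: v3_cases; cases y rule: v3_cases) (simp add: algebra_simps)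

lemma HQ:
  fixes f q :: "'k::alg_closed_field pol3" and l :: "'k v3"
  assumes l: "l \<noteq> (0, 0, 0)" and h: "homogeneous3 d f" and fq: "f = lin3 l * q" and d: "d \<ge> 1"
    and u: "u \<noteq> 0"
  shows "ev q (sc u x) = u ^ (d - 1) * ev q x"
proof -
  have gen: "ev q (sc u x) = u ^ (d - 1) * ev q x" if lx: "dot l x \<noteq> 0" for x
  proof -
    have "u * dot l x * ev q (sc u x) = ev f (sc u x)" by (simp add: fq dot_sc)
    also have "\<dots> = u ^ d * ev f x" by (rule homog_scale[OF h])
    also have "\<dots> = u * dot l x * (u ^ (d - 1) * ev q x)"
    proof -
      obtain e where e: "d = Suc e" using d by (cases d) auto
      show ?thesis by (simp add: fq e mult_ac)
    qed
    finally show ?thesis using u lx by simp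
  qed
  obtain y where y: "dot l y \<noteq> 0" using nonzero_dir[OF l] by blast
  show ?thesis
  proof (cases "dot l x = 0")
    case False thus ?thesis by (rule gen)
  next
    case True
    obtain P1 where P1: "\<And>t. ev q (vadd (sc u x) (sc t (sc u y))) = poly P1 t" using restr_poly by blast
    obtain P2 where P2: "\<And>t. ev q (vadd x (sc t y)) = poly P2 t" using restr_poly by blast
    have "P1 - smult (u ^ (d - 1)) P2 = 0"
    proof (rule poly_inj1_cofinite[of "{0}"])
      fix t :: 'k assume "t \<notin> {0}"
      hence "dot l (vadd x (sc t y)) \<noteq> 0" using True y by (simp add: dot_vadd dot_sc)
      hence "ev q (sc u (vadd x (sc t y))) = u ^ (d - 1) * ev q (vadd x (sc t y))" by (rule gen)
      thus "poly (P1 - smult (u ^ (d - 1)) P2) t = 0"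
        using P1[of t] P2[of t] by (simp add: vadd_sc_sc)
    qed simp
    hence "poly P1 0 = u ^ (d - 1) * poly P2 0" by (metis eq_iff_diff_eq_0 poly_smult)
    thus ?thesis using P1[of 0] P2[of 0] by (cases x rule: v3_cases; cases y rule: v3_cases) simp
  qed
qed


lemma noroot:
  fixes A B C :: "'k::alg_closed_field"
  assumes "\<And>z. z ^ 2 * A + z * B + C \<noteq> 0"
  shows "A = 0 \<and> B = 0"
proof (rule ccontr)
  assume nz: "\<not> (A = 0 \<and> B = 0)"
  show False
  proof (cases "A = 0")
    case False
    obtain z where "z ^ 2 + (B / A) * z + C / A = 0" using quad_root by blast
    hence "A * (z ^ 2 + (B / A) * z + C / A) = 0" by simp
    hence "z ^ 2 * A + z * B + C = 0" using False by (simp add: algebra_simps)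
    thus False using assms by blast
  next
    case True
    hence "B \<noteq> 0" using nz by auto
    hence "(- C / B) ^ 2 * A + (- C / B) * B + C = 0" using True by simp
    thus False using assms by blast
  qed
qed

lemma vec_np:
  fixes b c :: "'k::field v3"
  assumes ind: "\<And>s t. vadd (sc s b) (sc t c) = (0, 0, 0) \<Longrightarrow> s = 0 \<and> t = 0"
    and e: "vadd b (sc t' c) = sc k (vadd b (sc t c))"
  shows "t = t'"
proof -
  have "vadd (sc (1 - k) b) (sc (t' - k * t) c) = (0, 0, 0)"
    using e by (cases b rule: v3_cases; cases c rule: v3_cases) (simp add: algebra_simps)
  hence "1 - k = 0 \<and> t' - k * t = 0" by (rule ind)
  thus ?thesis by simp
qed

lemma SL:
  fixes f2 f3 f4 q2 q3 q4 :: "'k::alg_closed_field pol3" and l :: "'k v3"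
  assumes l: "l \<noteq> (0, 0, 0)"
    and h2: "homogeneous3 2 f2" and h3: "homogeneous3 3 f3" and h4: "homogeneous3 4 f4"
    and e2: "f2 = lin3 l * q2" and e3: "f3 = lin3 l * q3" and e4: "f4 = lin3 l * q4"
  shows "\<not> finite_sing (quartic f2 f3 f4)"
proof -
  have F: "quartic f2 f3 f4 = [:lin3 l:] * [:q4, q3, q2:]"
    by (simp add: quartic_def e2 e3 e4)
  define H where "H x z = z ^ 2 * ev q2 x + z * ev q3 x + ev q4 x" for x z
  have sing: "ext4 x z \<in> sing_vecs ([:lin3 l:] * [:q4, q3, q2:])"
    if "dot l x = 0" "x \<noteq> (0, 0, 0)" "H x z = 0" for x z
  proof (rule sing_prod)
    show "ext4 x z \<noteq> (0, 0, 0, 0)" using that by (simp add: ext4_zero)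
    show "eval4 [:lin3 l:] (ext4 x z) = 0" using that by (simp add: eval4_ext4)
    show "eval4 [:q4, q3, q2:] (ext4 x z) = 0" using that
      by (simp add: eval4_ext4 H_def algebra_simps power2_eq_square)
  qed
  show ?thesis unfolding F
  proof (cases "\<exists>x. dot l x = 0 \<and> x \<noteq> (0, 0, 0) \<and> (\<forall>z. H x z = 0)")
    case True
    then obtain x where x: "dot l x = 0" "x \<noteq> (0, 0, 0)" "\<And>z. H x z = 0" by blast
    show "\<not> finite_sing ([:lin3 l:] * [:q4, q3, q2:])"
    proof (rule not_finite_sing[of UNIV "\<lambda>z. ext4 x z"])
      show "infinite (UNIV :: 'k set)" by (rule alg_closed_infinite)
      show "ext4 x z \<in> sing_vecs ([:lin3 l:] * [:q4, q3, q2:])" for z using sing x by blast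
      fix t t' k assume "ext4 x t' = smul k (ext4 x t)"
      hence e: "x = sc k x" "t' = k * t" unfolding ext4_smul by auto
      have "k = 1"
      proof (rule ccontr)
        assume "k \<noteq> 1"
        hence "x = (0, 0, 0)" using e(1) by (cases x rule: v3_cases) (auto simp: algebra_simps)
        thus False using x by simp
      qed
      thus "t = t'" using e by simp
    qed
  next
    case notall: False
    obtain b c where b: "dot l b = 0" and c: "dot l c = 0"
      and ind: "\<And>s t. vadd (sc s b) (sc t c) = (0, 0, 0) \<Longrightarrow> s = 0 \<and> t = 0"
      using ker_basis[OF l] by blast
    define xt where "xt t = vadd b (sc t c)" for t
    have lxt: "dot l (xt t) = 0" for t by (simp add: xt_def dot_vadd dot_sc b c)
    have nzxt: "xt t \<noteq> (0, 0, 0)" for t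
    proof
      assume "xt t = (0, 0, 0)"
      hence "vadd (sc 1 b) (sc t c) = (0, 0, 0)" unfolding xt_def by (cases b rule: v3_cases) simp
      thus False using ind[of 1 t] by simp
    qed
    have cnz: "c \<noteq> (0, 0, 0)"
    proof
      assume "c = (0, 0, 0)"
      hence "vadd (sc 0 b) (sc 1 c) = (0, 0, 0)" by (cases b rule: v3_cases) simp
      thus False using ind[of 0 1] by simp
    qed
    define A where "A = {t. \<exists>z. H (xt t) z = 0}"
    show "\<not> finite_sing ([:lin3 l:] * [:q4, q3, q2:])"
    proof (cases "finite A")
      case False
      define zt where "zt t = (SOME z. H (xt t) z = 0)" for t
      have zt: "H (xt t) (zt t) = 0" if "t \<in> A" for t
        using that unfolding A_def zt_def by (metis (mono_tags, lifting) mem_Collect_eq someI_ex)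
      show ?thesis
      proof (rule not_finite_sing[of A "\<lambda>t. ext4 (xt t) (zt t)"])
        show "infinite A" by fact
        show "ext4 (xt t) (zt t) \<in> sing_vecs ([:lin3 l:] * [:q4, q3, q2:])" if "t \<in> A" for t
          using sing lxt nzxt zt[OF that] by blast
        fix t t' k assume "ext4 (xt t') (zt t') = smul k (ext4 (xt t) (zt t))"
        hence "xt t' = sc k (xt t)" unfolding ext4_smul by auto
        thus "t = t'" unfolding xt_def using vec_np[OF ind] by blast
      qed
    next
      case True
      have out: "ev q2 (xt t) = 0 \<and> ev q3 (xt t) = 0" if "t \<notin> A" for t
        using that unfolding A_def H_def by (intro noroot) auto
      obtain P2 where P2: "\<And>t. ev q2 (vadd b (sc t c)) = poly P2 t" using restr_poly by blast
      obtain P3 where P3: "\<And>t. ev q3 (vadd b (sc t c)) = poly P3 t" using restr_poly by blast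
      obtain P4 where P4: "\<And>t. ev q4 (vadd b (sc t c)) = poly P4 t" using restr_poly by blast
      have "P2 = 0" by (rule poly_inj1_cofinite[OF True]) (use out P2 xt_def in auto)
      hence z2: "ev q2 (xt t) = 0" for t using P2 xt_def by simp
      have "P3 = 0" by (rule poly_inj1_cofinite[OF True]) (use out P3 xt_def in auto)
      hence z3: "ev q3 (xt t) = 0" for t using P3 xt_def by simp
      have nz4: "ev q4 (xt t) \<noteq> 0" for t
      proof
        assume "ev q4 (xt t) = 0"
        hence "\<forall>z. H (xt t) z = 0" by (simp add: H_def z2 z3)
        thus False using notall lxt nzxt by blast
      qed
      have "degree P4 = 0"
      proof (rule ccontr)
        assume "degree P4 \<noteq> 0"
        then obtain t where "poly P4 t = 0" using alg_closed_imp_poly_has_root by blast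
        thus False using nz4[of t] P4 xt_def by simp
      qed
      then obtain \<kappa> where \<kappa>: "P4 = [:\<kappa>:]" by (metis degree_eq_zeroE)
      have q4c: "ev q4 (xt t) = \<kappa>" for t using P4 \<kappa> xt_def by simp
      have sc_rel: "vadd c (sc u b) = sc u (xt (1 / u))" if "u \<noteq> 0" for u :: 'k
        using that unfolding xt_def
        by (cases b rule: v3_cases; cases c rule: v3_cases) (simp add: field_simps)
      have c2: "ev q2 c = 0"
      proof (rule dens[of "{0}" _ c b])
        fix u :: 'k assume "u \<notin> {0}"
        hence u: "u \<noteq> 0" by simp
        have "ev q2 (vadd c (sc u b)) = u ^ (2 - 1) * ev q2 (xt (1 / u))"
          unfolding sc_rel[OF u] by (rule HQ[OF l h2 e2 _ u]) simp
        thus "ev q2 (vadd c (sc u b)) = 0" by (simp add: z2)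
      qed simp
      have c3: "ev q3 c = 0"
      proof (rule dens[of "{0}" _ c b])
        fix u :: 'k assume "u \<notin> {0}"
        hence u: "u \<noteq> 0" by simp
        have "ev q3 (vadd c (sc u b)) = u ^ (3 - 1) * ev q3 (xt (1 / u))"
          unfolding sc_rel[OF u] by (rule HQ[OF l h3 e3 _ u]) simp
        thus "ev q3 (vadd c (sc u b)) = 0" by (simp add: z3)
      qed simp
      have c4: "ev q4 c = 0"
      proof -
        obtain R where R: "\<And>u. ev q4 (vadd c (sc u b)) = poly R u" using restr_poly by blast
        have "R - smult \<kappa> (monom 1 3) = 0"
        proof (rule poly_inj1_cofinite[of "{0}"])
          fix u :: 'k assume "u \<notin> {0}"
          hence u: "u \<noteq> 0" by simp
          have "ev q4 (vadd c (sc u b)) = u ^ (4 - 1) * ev q4 (xt (1 / u))"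
            unfolding sc_rel[OF u] by (rule HQ[OF l h4 e4 _ u]) simp
          thus "poly (R - smult \<kappa> (monom 1 3)) u = 0" using R[of u] q4c
            by (simp add: poly_monom mult.commute)
        qed simp
        hence "poly R 0 = 0" by (metis eq_iff_diff_eq_0 mult_zero_right poly_monom poly_smult power_0_left zero_neq_numeral)
        thus ?thesis using R[of 0] by (cases c rule: v3_cases; cases b rule: v3_cases) simp
      qed
      have "\<forall>z. H c z = 0" by (simp add: H_def c2 c3 c4)
      thus ?thesis using notall c cnz by blast
    qed
  qed
qed


definition qf :: "'k::comm_ring_1 \<Rightarrow> 'k \<Rightarrow> 'k \<Rightarrow> 'k \<Rightarrow> 'k \<Rightarrow> 'k \<Rightarrow> 'k v3 \<Rightarrow> 'k" where
  "qf a b c d e f x = (case x of (x0, x1, x2) \<Rightarrow>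
     a * x0 ^ 2 + b * x1 ^ 2 + c * x2 ^ 2 + d * x0 * x1 + e * x0 * x2 + f * x1 * x2)"

lemma qf_simp[simp]: "qf a b c d e f (x0, x1, x2) =
   a * x0 ^ 2 + b * x1 ^ 2 + c * x2 ^ 2 + d * x0 * x1 + e * x0 * x2 + f * x1 * x2"
  by (simp add: qf_def)

definition CONCL :: "('k::comm_ring_1 v3 \<Rightarrow> 'k) \<Rightarrow> bool" where
  "CONCL q \<longleftrightarrow> (\<exists>l m. l \<noteq> (0, 0, 0) \<and> m \<noteq> (0, 0, 0) \<and> (\<forall>x. q x = dot l x * dot m x)) \<or>
     (\<exists>M Mi k. k \<noteq> 0 \<and> (\<forall>y. appl Mi (appl M y) = y) \<and> (\<forall>x. appl M (appl Mi x) = x) \<and>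
        (\<forall>y0 y1 y2. q (appl M (y0, y1, y2)) = k * (y0 ^ 2 - y1 * y2)))"

lemma binfac:
  fixes B E C :: "'k::alg_closed_field"
  assumes two: "(2::'k) \<noteq> 0"
  shows "\<exists>p1 p2 r1 r2. \<forall>x1 x2. B * x1 ^ 2 + E * x1 * x2 + C * x2 ^ 2 = (p1 * x1 + p2 * x2) * (r1 * x1 + r2 * x2)"
proof (cases "B = 0")
  case True
  thus ?thesis by (intro exI[of _ 0] exI[of _ 1] exI[of _ E] exI[of _ C]) (simp add: algebra_simps power2_eq_square)
next
  case False
  have four: "(4::'k) \<noteq> 0"
  proof -
    have "(4::'k) = 2 * 2" by simp
    thus ?thesis using two by (metis no_zero_divisors)
  qed
  obtain \<delta> where \<delta>: "\<delta> ^ 2 = E ^ 2 - 4 * B * C" using sqrt_ex by blast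
  define \<rho>1 where "\<rho>1 = (- E + \<delta>) / (2 * B)"
  define \<rho>2 where "\<rho>2 = (- E - \<delta>) / (2 * B)"
  have s: "\<rho>1 + \<rho>2 = - E / B" using False two four by (simp add: \<rho>1_def \<rho>2_def field_simps)
  have p: "\<rho>1 * \<rho>2 = C / B"
  proof -
    have "\<rho>1 * \<rho>2 = (E ^ 2 - \<delta> ^ 2) / (4 * B ^ 2)" using False two four
      by (simp add: \<rho>1_def \<rho>2_def field_simps power2_eq_square)
    also have "\<dots> = C / B" using False two four \<delta> by (simp add: field_simps power2_eq_square) algebra
    finally show ?thesis .
  qed
  have "B * x1 ^ 2 + E * x1 * x2 + C * x2 ^ 2 = (B * x1 + (- B * \<rho>1) * x2) * (1 * x1 + (- \<rho>2) * x2)" for x1 x2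
  proof -
    have E: "E = - B * (\<rho>1 + \<rho>2)" using s False by (simp add: field_simps)
    have C: "C = B * (\<rho>1 * \<rho>2)" using p False by (simp add: field_simps)
    show ?thesis unfolding E C by (simp add: algebra_simps power2_eq_square)
  qed
  thus ?thesis by blast
qed


lemma Q1:
  fixes a b c d e f :: "'k::alg_closed_field"
  assumes two: "(2::'k) \<noteq> 0" and a: "a \<noteq> 0"
  shows "CONCL (qf a b c d e f)"
proof -
  define ia where "ia = inverse a"
  define h2 where "h2 = inverse (2::'k)"
  have ia: "a * ia = 1" using a by (simp add: ia_def)
  have h2: "2 * h2 = 1" using two by (simp add: h2_def)
  define w where "w = h2 * ia"
  define U where "U = (1::'k, d * w, e * w)"
  define B' where "B' = b - a * (d * w) ^ 2"
  define E' where "E' = f - 2 * a * (d * w) * (e * w)"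
  define C' where "C' = c - a * (e * w) ^ 2"
  have dec: "qf a b c d e f (x0, x1, x2) = a * (dot U (x0, x1, x2)) ^ 2 + (B' * x1 ^ 2 + E' * x1 * x2 + C' * x2 ^ 2)"
    for x0 x1 x2
  proof -
    have "a * (x0 + d * w * x1 + e * w * x2) ^ 2 + ((b - a * (d * w) ^ 2) * x1 ^ 2 +
      (f - 2 * a * (d * w) * (e * w)) * x1 * x2 + (c - a * (e * w) ^ 2) * x2 ^ 2) =
      a * x0 ^ 2 + b * x1 ^ 2 + c * x2 ^ 2 + d * x0 * x1 + e * x0 * x2 + f * x1 * x2"
      using ia h2 unfolding w_def by algebra
    thus ?thesis by (simp add: U_def B'_def E'_def C'_def)
  qed
  obtain p1 p2 r1 r2 where pr: "\<And>x1 x2. B' * x1 ^ 2 + E' * x1 * x2 + C' * x2 ^ 2 = (p1 * x1 + p2 * x2) * (r1 * x1 + r2 * x2)"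
    using binfac[OF two] by blast
  have D: "qf a b c d e f (x0, x1, x2) = a * (dot U (x0, x1, x2)) ^ 2 + (p1 * x1 + p2 * x2) * (r1 * x1 + r2 * x2)"
    for x0 x1 x2 using dec pr by simp
  show ?thesis
  proof (cases "p1 * r2 - p2 * r1 = 0")
    case True
    have "\<exists>\<kappa>. \<forall>x1 x2. (p1 * x1 + p2 * x2) * (r1 * x1 + r2 * x2) = \<kappa> * (p1 * x1 + p2 * x2) ^ 2"
    proof (cases "p1 = 0 \<and> p2 = 0")
      case True thus ?thesis by (intro exI[of _ 0]) simp
    next
      case False
      show ?thesis
      proof (cases "p1 = 0")
        case True
        hence p2: "p2 \<noteq> 0" using False by simp
        have "r1 = 0" using \<open>p1 * r2 - p2 * r1 = 0\<close> True p2 by simp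
        thus ?thesis using True p2
          by (intro exI[of _ "r2 / p2"]) (simp add: field_simps power2_eq_square)
      next
        case p1: False
        have "r2 = p2 * r1 / p1" using \<open>p1 * r2 - p2 * r1 = 0\<close> p1 by (simp add: field_simps)
        thus ?thesis using p1
          by (intro exI[of _ "r1 / p1"]) (simp add: field_simps power2_eq_square)
      qed
    qed
    then obtain \<kappa> where \<kappa>: "\<And>x1 x2. (p1 * x1 + p2 * x2) * (r1 * x1 + r2 * x2) = \<kappa> * (p1 * x1 + p2 * x2) ^ 2"
      by blast
    obtain \<rho> where \<rho>: "\<rho> ^ 2 = - \<kappa> * ia" using sqrt_ex by blast
    have k: "\<kappa> = - a * \<rho> ^ 2" using \<rho> ia by algebra
    define l where "l = (a, a * (d * w - \<rho> * p1), a * (e * w - \<rho> * p2))"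
    define m where "m = (1::'k, d * w + \<rho> * p1, e * w + \<rho> * p2)"
    have "\<forall>x. qf a b c d e f x = dot l x * dot m x"
    proof
      fix x :: "'k v3"
      obtain x0 x1 x2 where x: "x = (x0, x1, x2)" by (rule v3_cases)
      have "a * (x0 + d * w * x1 + e * w * x2) ^ 2 + - a * \<rho> ^ 2 * (p1 * x1 + p2 * x2) ^ 2 =
        (a * x0 + a * (d * w - \<rho> * p1) * x1 + a * (e * w - \<rho> * p2) * x2) *
        (1 * x0 + (d * w + \<rho> * p1) * x1 + (e * w + \<rho> * p2) * x2)" by algebra
      thus "qf a b c d e f x = dot l x * dot m x"
        unfolding x D \<kappa> k by (simp add: l_def m_def U_def)
    qed
    moreover have "l \<noteq> (0, 0, 0)" "m \<noteq> (0, 0, 0)" using a by (auto simp: l_def m_def)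
    ultimately show ?thesis unfolding CONCL_def by blast
  next
    case False
    define \<delta> where "\<delta> = p1 * r2 - p2 * r1"
    have \<delta>: "\<delta> \<noteq> 0" using False by (simp add: \<delta>_def)
    define i\<delta> where "i\<delta> = inverse \<delta>"
    have id: "\<delta> * i\<delta> = 1" using \<delta> by (simp add: i\<delta>_def)
    define Mi :: "'k m3" where "Mi = (U, (0, - p1 * ia, - p2 * ia), (0, r1, r2))"
    define M :: "'k m3" where "M = ((1, - (d * w) * (- a * r2 * i\<delta>) - (e * w) * (a * r1 * i\<delta>),
                             - (d * w) * (- p2 * i\<delta>) - (e * w) * (p1 * i\<delta>)),
                         (0, - a * r2 * i\<delta>, - p2 * i\<delta>), (0, a * r1 * i\<delta>, p1 * i\<delta>))"
    have inv1: "appl Mi (appl M y) = y" for y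
    proof -
      obtain y0 y1 y2 where y: "y = (y0, y1, y2)" by (rule v3_cases)
      have e1: "- p1 * ia * ((- a * r2 * i\<delta>) * y1 + (- p2 * i\<delta>) * y2) + - p2 * ia * ((a * r1 * i\<delta>) * y1 + (p1 * i\<delta>) * y2) = y1"
        using ia id unfolding \<delta>_def by algebra
      have e2: "r1 * ((- a * r2 * i\<delta>) * y1 + (- p2 * i\<delta>) * y2) + r2 * ((a * r1 * i\<delta>) * y1 + (p1 * i\<delta>) * y2) = y2"
        using ia id unfolding \<delta>_def by algebra
      have e0: "1 * (1 * y0 + (- (d * w) * (- a * r2 * i\<delta>) - (e * w) * (a * r1 * i\<delta>)) * y1 + (- (d * w) * (- p2 * i\<delta>) - (e * w) * (p1 * i\<delta>)) * y2)
         + d * w * ((- a * r2 * i\<delta>) * y1 + (- p2 * i\<delta>) * y2) + e * w * ((a * r1 * i\<delta>) * y1 + (p1 * i\<delta>) * y2) = y0"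
        by (simp add: algebra_simps)
      show ?thesis unfolding y using e0 e1 e2 by (simp add: M_def Mi_def U_def)
    qed
    have inv2: "appl M (appl Mi x) = x" for x
    proof -
      obtain x0 x1 x2 where x: "x = (x0, x1, x2)" by (rule v3_cases)
      have e1: "(- a * r2 * i\<delta>) * (- p1 * ia * x1 + - p2 * ia * x2) + (- p2 * i\<delta>) * (r1 * x1 + r2 * x2) = x1"
        using ia id unfolding \<delta>_def by algebra
      have e2: "(a * r1 * i\<delta>) * (- p1 * ia * x1 + - p2 * ia * x2) + (p1 * i\<delta>) * (r1 * x1 + r2 * x2) = x2"
        using ia id unfolding \<delta>_def by algebra
      have e0: "1 * (1 * x0 + d * w * x1 + e * w * x2) + (- (d * w) * (- a * r2 * i\<delta>) - (e * w) * (a * r1 * i\<delta>)) * (- p1 * ia * x1 + - p2 * ia * x2)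
        + (- (d * w) * (- p2 * i\<delta>) - (e * w) * (p1 * i\<delta>)) * (r1 * x1 + r2 * x2) = x0"
        using ia id unfolding \<delta>_def by algebra
      show ?thesis unfolding x using e0 e1 e2 by (simp add: M_def Mi_def U_def)
    qed
    have main: "qf a b c d e f (appl M (y0, y1, y2)) = a * (y0 ^ 2 - y1 * y2)" for y0 y1 y2
    proof -
      obtain x0 x1 x2 where x: "appl M (y0, y1, y2) = (x0, x1, x2)" by (rule v3_cases)
      have "appl Mi (x0, x1, x2) = (y0, y1, y2)" using inv1[of "(y0, y1, y2)"] x by simp
      hence e: "dot U (x0, x1, x2) = y0" "- p1 * ia * x1 + - p2 * ia * x2 = y1" "r1 * x1 + r2 * x2 = y2"
        by (simp_all add: Mi_def U_def)
      have e2: "p1 * x1 + p2 * x2 = - a * y1"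
      proof -
        have "- a * (- p1 * ia * x1 + - p2 * ia * x2) = p1 * x1 + p2 * x2" using ia by algebra
        thus ?thesis using e(2) by simp
      qed
      show ?thesis unfolding x D e(1) e(3) e2 by (simp add: algebra_simps)
    qed
    show ?thesis unfolding CONCL_def using inv1 inv2 main a by blast
  qed
qed


definition tappl :: "'k::comm_ring_1 m3 \<Rightarrow> 'k v3 \<Rightarrow> 'k v3" where
  "tappl M l = (case M of (r0, r1, r2) \<Rightarrow> case l of (l0, l1, l2) \<Rightarrow>
     vadd (vadd (sc l0 r0) (sc l1 r1)) (sc l2 r2))"

lemma dot_appl: "dot l (appl M x) = dot (tappl M l) x"
  by (cases M rule: m3_cases; cases l rule: v3_cases; cases x rule: v3_cases)
     (simp add: tappl_def algebra_simps)

definition mmul :: "'k::comm_ring_1 m3 \<Rightarrow> 'k m3 \<Rightarrow> 'k m3" where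
  "mmul A B = (case A of (a0, a1, a2) \<Rightarrow> (tappl B a0, tappl B a1, tappl B a2))"

lemma appl_mmul: "appl (mmul A B) y = appl A (appl B y)"
  by (cases A) (simp add: mmul_def dot_appl)

lemma dot_all_zero: "(\<And>y. dot l y = (0::'k::comm_ring_1)) \<Longrightarrow> l = (0, 0, 0)"
proof -
  assume h: "\<And>y. dot l y = 0"
  obtain a b c where l: "l = (a, b, c)" by (rule v3_cases)
  have "a = 0" using h[of "(1, 0, 0)"] l by simp
  moreover have "b = 0" using h[of "(0, 1, 0)"] l by simp
  moreover have "c = 0" using h[of "(0, 0, 1)"] l by simp
  ultimately show ?thesis using l by simp
qed

lemma transfer:
  assumes C: "CONCL q'" and qP: "\<And>x. q (appl P x) = q' x"
    and PP': "\<And>x. appl P (appl P' x) = x" and P'P: "\<And>x. appl P' (appl P x) = x"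
  shows "CONCL q"
proof -
  have qe: "q x = q' (appl P' x)" for x using qP[of "appl P' x"] PP' by simp
  have nz: "tappl P' l \<noteq> (0, 0, 0)" if "l \<noteq> (0, 0, 0)" for l
  proof
    assume "tappl P' l = (0, 0, 0)"
    hence "dot l (appl P' x) = 0" for x by (cases x rule: v3_cases) (simp add: dot_appl)
    hence "dot l y = 0" for y using P'P[of y] by metis
    hence "l = (0, 0, 0)" by (rule dot_all_zero)
    thus False using that by simp
  qed
  have C': "(\<exists>l m. l \<noteq> (0, 0, 0) \<and> m \<noteq> (0, 0, 0) \<and> (\<forall>x. q' x = dot l x * dot m x)) \<or>
     (\<exists>M Mi k. k \<noteq> 0 \<and> (\<forall>y. appl Mi (appl M y) = y) \<and> (\<forall>x. appl M (appl Mi x) = x) \<and>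
        (\<forall>y0 y1 y2. q' (appl M (y0, y1, y2)) = k * (y0 ^ 2 - y1 * y2)))" using C unfolding CONCL_def .
  from C' show ?thesis
  proof (elim disjE exE conjE)
    fix l m assume l: "l \<noteq> (0, 0, 0)" and m: "m \<noteq> (0, 0, 0)" and lm: "\<forall>x. q' x = dot l x * dot m x"
    have "q x = dot (tappl P' l) x * dot (tappl P' m) x" for x
      using spec[OF lm, of "appl P' x"] qe[of x] dot_appl by metis
    thus ?thesis unfolding CONCL_def using nz[OF l] nz[OF m] by blast
  next
    fix M Mi k assume k: "k \<noteq> 0" and i1: "\<forall>y. appl Mi (appl M y) = y" and i2: "\<forall>x. appl M (appl Mi x) = x"
      and main: "\<forall>y0 y1 y2. q' (appl M (y0, y1, y2)) = k * (y0 ^ 2 - y1 * y2)"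
    have "(\<forall>y. appl (mmul Mi P') (appl (mmul P M) y) = y) \<and> (\<forall>x. appl (mmul P M) (appl (mmul Mi P') x) = x) \<and>
      (\<forall>y0 y1 y2. q (appl (mmul P M) (y0, y1, y2)) = k * (y0 ^ 2 - y1 * y2))"
    proof (intro conjI allI)
      show "appl (mmul Mi P') (appl (mmul P M) y) = y" for y using i1 P'P appl_mmul by metis
      show "appl (mmul P M) (appl (mmul Mi P') x) = x" for x using i2 PP' appl_mmul by metis
      show "q (appl (mmul P M) (y0, y1, y2)) = k * (y0 ^ 2 - y1 * y2)" for y0 y1 y2
        using main qP by (simp add: appl_mmul)
    qed
    thus ?thesis unfolding CONCL_def using k by blast
  qed
qed

lemma sw01: "appl ((0, 1, 0), (1, 0, 0), (0, 0, 1)) (appl ((0, 1, 0), (1, 0, 0), (0, 0, 1)) x) = (x::'k::comm_ring_1 v3)"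
  by (cases x rule: v3_cases) simp
lemma sw02: "appl ((0, 0, 1), (0, 1, 0), (1, 0, 0)) (appl ((0, 0, 1), (0, 1, 0), (1, 0, 0)) x) = (x::'k::comm_ring_1 v3)"
  by (cases x rule: v3_cases) simp
lemma sh1: "appl ((1, 0, 0), (1, 1, 0), (0, 0, 1)) (appl ((1, 0, 0), (-1, 1, 0), (0, 0, 1)) x) = (x::'k::comm_ring_1 v3)"
  by (cases x rule: v3_cases) simp
lemma sh1': "appl ((1, 0, 0), (-1, 1, 0), (0, 0, 1)) (appl ((1, 0, 0), (1, 1, 0), (0, 0, 1)) x) = (x::'k::comm_ring_1 v3)"
  by (cases x rule: v3_cases) simp
lemma sh2: "appl ((1, 0, 0), (0, 1, 0), (1, 0, 1)) (appl ((1, 0, 0), (0, 1, 0), (-1, 0, 1)) x) = (x::'k::comm_ring_1 v3)"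
  by (cases x rule: v3_cases) simp
lemma sh2': "appl ((1, 0, 0), (0, 1, 0), (-1, 0, 1)) (appl ((1, 0, 0), (0, 1, 0), (1, 0, 1)) x) = (x::'k::comm_ring_1 v3)"
  by (cases x rule: v3_cases) simp
lemma qsw01: "qf a b c d e f (appl ((0, 1, 0), (1, 0, 0), (0, 0, 1)) x) = qf b a c d f e (x::'k::comm_ring_1 v3)"
  by (cases x rule: v3_cases) (simp add: algebra_simps)
lemma qsw02: "qf a b c d e f (appl ((0, 0, 1), (0, 1, 0), (1, 0, 0)) x) = qf c b a f e d (x::'k::comm_ring_1 v3)"
  by (cases x rule: v3_cases) (simp add: algebra_simps)
lemma qsh1: "qf 0 0 0 d e f (appl ((1, 0, 0), (1, 1, 0), (0, 0, 1)) x) = qf d 0 0 d (e + f) f (x::'k::comm_ring_1 v3)"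
  by (cases x rule: v3_cases) (simp add: algebra_simps power2_eq_square)
lemma qsh2: "qf 0 0 0 0 e f (appl ((1, 0, 0), (0, 1, 0), (1, 0, 1)) x) = qf e 0 0 f e f (x::'k::comm_ring_1 v3)"
  by (cases x rule: v3_cases) (simp add: algebra_simps power2_eq_square)

lemma classify:
  fixes a b c d e f :: "'k::alg_closed_field"
  assumes two: "(2::'k) \<noteq> 0" and nz: "\<not> (a = 0 \<and> b = 0 \<and> c = 0 \<and> d = 0 \<and> e = 0 \<and> f = 0)"
  shows "CONCL (qf a b c d e f)"
proof (cases "a \<noteq> 0")
  case True thus ?thesis by (rule Q1[OF two])
next
  case a0: False
  show ?thesis
  proof (cases "b \<noteq> 0")
    case True
    have "CONCL (qf b a c d f e)" by (rule Q1[OF two True])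
    thus ?thesis using transfer[where q = "qf a b c d e f" and q' = "qf b a c d f e" and P = "((0, 1, 0), (1, 0, 0), (0, 0, 1))"
        and P' = "((0, 1, 0), (1, 0, 0), (0, 0, 1))", OF _ qsw01 sw01 sw01] by blast
  next
    case b0: False
    show ?thesis
    proof (cases "c \<noteq> 0")
      case True
      have "CONCL (qf c b a f e d)" by (rule Q1[OF two True])
      thus ?thesis using transfer[where q = "qf a b c d e f" and q' = "qf c b a f e d" and P = "((0, 0, 1), (0, 1, 0), (1, 0, 0))"
        and P' = "((0, 0, 1), (0, 1, 0), (1, 0, 0))", OF _ qsw02 sw02 sw02] by blast
    next
      case c0: False
      have a: "a = 0" "b = 0" "c = 0" using a0 b0 c0 by auto
      show ?thesis
      proof (cases "d \<noteq> 0")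
        case True
        have "CONCL (qf d 0 0 d (e + f) f)" by (rule Q1[OF two True])
        hence "CONCL (qf 0 0 0 d e f)"
          using transfer[where q = "qf 0 0 0 d e f" and q' = "qf d 0 0 d (e + f) f" and P = "((1, 0, 0), (1, 1, 0), (0, 0, 1))"
              and P' = "((1, 0, 0), (-1, 1, 0), (0, 0, 1))", OF _ qsh1 sh1 sh1'] by blast
        thus ?thesis unfolding a .
      next
        case d0: False
        have d: "d = 0" using d0 by auto
        show ?thesis
        proof (cases "e \<noteq> 0")
          case True
          have "CONCL (qf e 0 0 f e f)" by (rule Q1[OF two True])
          hence "CONCL (qf 0 0 0 0 e f)"
            using transfer[where q = "qf 0 0 0 0 e f" and q' = "qf e 0 0 f e f" and P = "((1, 0, 0), (0, 1, 0), (1, 0, 1))"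
              and P' = "((1, 0, 0), (0, 1, 0), (-1, 0, 1))", OF _ qsh2 sh2 sh2'] by blast
          thus ?thesis unfolding a d .
        next
          case e0: False
          have e: "e = 0" using e0 by auto
          have f0: "f \<noteq> 0" using nz a d e by auto
          have "qf a b c d e f x = dot (0, f, 0) x * dot (0, 0, 1) x" for x
            unfolding a d e by (cases x rule: v3_cases) simp
          hence "(0, f, 0) \<noteq> (0, 0, 0) \<and> (0, 0, 1::'k) \<noteq> (0, 0, 0) \<and> (\<forall>x. qf a b c d e f x = dot (0, f, 0) x * dot (0, 0, 1) x)"
            using f0 by simp
          thus ?thesis unfolding CONCL_def by (intro disjI1 exI)
        qed
      qed
    qed
  qed
qed

lemma homog_zero: "homogeneous3 d p \<Longrightarrow> i + j + l \<noteq> d \<Longrightarrow> mcoeff3 p i j l = 0"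
  unfolding homogeneous3_def by blast

lemma f2_qf:
  fixes f2 :: "'k::comm_ring_1 pol3"
  assumes h: "homogeneous3 2 f2"
  shows "ev f2 x = qf (mcoeff3 f2 2 0 0) (mcoeff3 f2 0 2 0) (mcoeff3 f2 0 0 2)
                     (mcoeff3 f2 1 1 0) (mcoeff3 f2 1 0 1) (mcoeff3 f2 0 1 1) x"
proof -
  obtain x0 x1 x2 where x: "x = (x0, x1, x2)" by (rule v3_cases)
  have z: "i + j + l \<noteq> 2 \<Longrightarrow> mcoeff3 f2 i j l = 0" for i j l using homog_zero[OF h] by blast
  have s: "(\<Sum>i\<le>2. g i) = g 0 + g 1 + g (2::nat)" for g :: "nat \<Rightarrow> 'k"
    by (simp add: numeral_2_eq_2)
  show ?thesis unfolding x
    by (simp add: eval3_expand[OF homog_bnd[OF h]] msum_def s z power2_eq_square mult_ac)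
qed


lemma not_unit_if_zero:
  fixes p :: "'k::alg_closed_field pol3"
  assumes "ev p x = 0" shows "\<not> is_unit p"
proof
  assume "is_unit p"
  then obtain q where "1 = p * q" by (elim dvdE)
  hence "ev (p * q) x = 1" by (metis ev_C3 C3_def one_pCons)
  thus False using assms by simp
qed

lemma lin3_zero: "ev (lin3 l) (0, 0, 0) = 0" by (cases l rule: v3_cases) simp

definition vanish :: "'k::comm_ring_1 pol3 \<Rightarrow> ('k v3 \<Rightarrow> bool) \<Rightarrow> bool" where
  "vanish g P \<longleftrightarrow> (\<forall>x. P x \<longrightarrow> ev g x = 0)"

lemma vanishD: assumes "vanish g P" "P x" shows "ev g x = 0"
  using assms unfolding vanish_def by blast

lemma qf_zero: "qf 0 0 0 0 0 0 x = (0::'k::comm_ring_1)" by (cases x rule: v3_cases) simp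

locale qctx =
  fixes f2 f3 f4 :: "'k::alg_closed_field pol3"
  assumes two: "(2::'k) \<noteq> 0"
    and h2: "homogeneous3 2 f2" and h3: "homogeneous3 3 f3" and h4: "homogeneous3 4 f4"
    and f2_nz: "f2 \<noteq> 0"
    and isolated: "finite_sing (quartic f2 f3 f4)"
begin

definition good :: "'k v3 set \<Rightarrow> bool" where
  "good T \<longleftrightarrow> finite T \<and> (\<forall>x\<in>T. x \<noteq> (0, 0, 0) \<and> ev f2 x = 0 \<and> ev f3 x = 0 \<and> ev f4 x = 0) \<and>
     (\<forall>x\<in>T. \<forall>y\<in>T. x \<noteq> y \<longrightarrow> \<not> prop3 x y)"

lemma good_subset: "good T \<Longrightarrow> S \<subseteq> T \<Longrightarrow> good S"
  unfolding good_def using finite_subset by blast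

lemma line_bound:
  fixes n :: "'k v3" and Tn :: "'k v3 set"
  assumes n: "n \<noteq> (0, 0, 0)" and f2n: "f2 = lin3 n * r" and g: "good Tn" and Tn: "\<And>x. x \<in> Tn \<Longrightarrow> dot n x = 0"
  shows "card Tn \<le> 4 \<and> (\<not> vanish f3 (\<lambda>x. dot n x = 0) \<longrightarrow> card Tn \<le> 3)"
proof -
  have fin: "finite Tn" using g by (simp add: good_def)
  have T: "\<And>x. x \<in> Tn \<Longrightarrow> x \<noteq> (0, 0, 0) \<and> dot n x = 0 \<and> ev f3 x = 0"
    "\<And>x. x \<in> Tn \<Longrightarrow> x \<noteq> (0, 0, 0) \<and> dot n x = 0 \<and> ev f4 x = 0"
    using g Tn by (auto simp: good_def)
  have np: "\<And>x y. x \<in> Tn \<Longrightarrow> y \<in> Tn \<Longrightarrow> x \<noteq> y \<Longrightarrow> \<not> prop3 x y"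
    using g by (auto simp: good_def)
  have c3: "card Tn \<le> 3" if nv: "\<not> vanish f3 (\<lambda>x. dot n x = 0)"
  proof (rule ccontr)
    assume "\<not> card Tn \<le> 3"
    hence "card Tn > 3" by simp
    hence "\<And>x. dot n x = 0 \<Longrightarrow> ev f3 x = 0" by (rule LL[OF n h3 fin _ T(1) np])
    thus False using nv by (simp add: vanish_def)
  qed
  have c4: "card Tn \<le> 4"
  proof (cases "vanish f3 (\<lambda>x. dot n x = 0)")
    case False thus ?thesis using c3 by simp
  next
    case True
    obtain q3 where q3: "f3 = lin3 n * q3" using DL[OF n vanishD[OF True]] by blast
    show ?thesis
    proof (rule ccontr)
      assume "\<not> card Tn \<le> 4"
      hence "card Tn > 4" by simp
      hence "\<And>x. dot n x = 0 \<Longrightarrow> ev f4 x = 0" by (rule LL[OF n h4 fin _ T(2) np])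
      then obtain q4 where q4: "f4 = lin3 n * q4" using DL[OF n] by blast
      have "\<not> finite_sing (quartic f2 f3 f4)" by (rule SL[OF n h2 h3 h4 f2n q3 q4])
      thus False using isolated by simp
    qed
  qed
  show ?thesis using c3 c4 by simp
qed

lemma card_split:
  assumes "finite T" shows "card T = card {x\<in>T. P x} + card {x\<in>T. \<not> P x}"
proof -
  have "T = {x\<in>T. P x} \<union> {x\<in>T. \<not> P x}" by auto
  hence "card T = card ({x\<in>T. P x} \<union> {x\<in>T. \<not> P x})" by simp
  also have "\<dots> = card {x\<in>T. P x} + card {x\<in>T. \<not> P x}"
    by (rule card_Un_disjoint) (use assms in auto)
  finally show ?thesis .
qed

lemma caseA:
  assumes l: "l \<noteq> (0, 0, 0)" and m: "m \<noteq> (0, 0, 0)" and lm: "\<And>x. ev f2 x = dot l x * dot m x"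
    and g: "good T"
  shows "card T \<le> 8 \<and> (card T \<ge> 7 \<longrightarrow> (\<exists>g. \<not> is_unit g \<and> g dvd f2 \<and> g dvd f3)) \<and> (card T = 8 \<longrightarrow> f2 dvd f3)"
proof -
  have f2lm: "f2 = lin3 l * lin3 m" by (rule ev_eqI) (simp add: lm)
  have f2ml: "f2 = lin3 m * lin3 l" using f2lm by (simp add: mult.commute)
  have fin: "finite T" using g by (simp add: good_def)
  define Tl where "Tl = {x\<in>T. dot l x = 0}"
  define Tm where "Tm = {x\<in>T. \<not> dot l x = 0}"
  have split: "card T = card Tl + card Tm" unfolding Tl_def Tm_def by (rule card_split[OF fin])
  have gl: "good Tl" using g by (rule good_subset) (auto simp: Tl_def)
  have gm: "good Tm" using g by (rule good_subset) (auto simp: Tm_def)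
  have Tm0: "dot m x = 0" if "x \<in> Tm" for x
    using that g lm[of x] by (auto simp: Tm_def good_def)
  have bl: "card Tl \<le> 4 \<and> (\<not> vanish f3 (\<lambda>x. dot l x = 0) \<longrightarrow> card Tl \<le> 3)"
    by (rule line_bound[OF l f2lm gl]) (simp add: Tl_def)
  have bm: "card Tm \<le> 4 \<and> (\<not> vanish f3 (\<lambda>x. dot m x = 0) \<longrightarrow> card Tm \<le> 3)"
    by (rule line_bound[OF m f2ml gm Tm0])
  have le8: "card T \<le> 8" using split bl bm by linarith
  have nu_l: "\<not> is_unit (lin3 l)" by (rule not_unit_if_zero[OF lin3_zero])
  have nu_m: "\<not> is_unit (lin3 m)" by (rule not_unit_if_zero[OF lin3_zero])
  have c7: "\<exists>g. \<not> is_unit g \<and> g dvd f2 \<and> g dvd f3" if "card T \<ge> 7"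
  proof (cases "vanish f3 (\<lambda>x. dot l x = 0)")
    case True
    obtain q where "f3 = lin3 l * q" using DL[OF l vanishD[OF True]] by blast
    hence "lin3 l dvd f3" by simp
    moreover have "lin3 l dvd f2" using f2lm by simp
    ultimately show ?thesis using nu_l by blast
  next
    case False
    hence vm: "vanish f3 (\<lambda>x. dot m x = 0)" using that split bl bm by linarith
    obtain q where "f3 = lin3 m * q" using DL[OF m vanishD[OF vm]] by blast
    hence "lin3 m dvd f3" by simp
    moreover have "lin3 m dvd f2" using f2ml by simp
    ultimately show ?thesis using nu_m by blast
  qed
  have c8: "f2 dvd f3" if c: "card T = 8"
  proof -
    have vl: "vanish f3 (\<lambda>x. dot l x = 0)" and vm: "vanish f3 (\<lambda>x. dot m x = 0)"
      using c split bl bm by linarith+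
    show ?thesis
    proof (cases "\<exists>y. dot m y = 0 \<and> dot l y \<noteq> 0")
      case False
      have "Tm = {}"
      proof (rule ccontr)
        assume "Tm \<noteq> {}"
        then obtain x where x: "x \<in> Tm" by blast
        hence "dot m x = 0" by (rule Tm0)
        moreover have "dot l x \<noteq> 0" using x by (simp add: Tm_def)
        ultimately show False using False by blast
      qed
      hence "card T \<le> 4" using split bl by simp
      thus ?thesis using c by simp
    next
      case True
      then obtain y where y: "dot m y = 0" "dot l y \<noteq> 0" by blast
      obtain q where q: "f3 = lin3 l * q" using DL[OF l vanishD[OF vl]] by blast
      have qv: "ev q x = 0" if mx: "dot m x = 0" for x
      proof (cases "dot l x = 0")
        case False
        have "ev f3 x = 0" by (rule vanishD[OF vm mx])
        hence "dot l x * ev q x = 0" using q by simp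
        thus ?thesis using False by simp
      next
        case True
        show ?thesis
        proof (rule dens[of "{0}" _ _ y])
          fix t :: 'k assume "t \<notin> {0}"
          hence t: "t \<noteq> 0" by simp
          have m0: "dot m (vadd x (sc t y)) = 0" using mx y by (simp add: dot_vadd dot_sc)
          have l0: "dot l (vadd x (sc t y)) \<noteq> 0" using True y t by (simp add: dot_vadd dot_sc)
          have "ev f3 (vadd x (sc t y)) = 0" by (rule vanishD[OF vm m0])
          hence "dot l (vadd x (sc t y)) * ev q (vadd x (sc t y)) = 0" using q by simp
          thus "ev q (vadd x (sc t y)) = 0" using l0 by simp
        qed simp
      qed
      obtain q' where q': "q = lin3 m * q'" using DL[OF m] qv by blast
      have "f3 = f2 * q'" unfolding q q' f2lm by (simp add: mult.assoc)
      thus ?thesis by simp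
    qed
  qed
  show ?thesis using le8 c7 c8 by blast
qed

lemma caseB:
  assumes k: "k \<noteq> 0" and i1: "\<And>y. appl Mi (appl M y) = y" and i2: "\<And>x. appl M (appl Mi x) = x"
    and main: "\<And>y0 y1 y2. ev f2 (appl M (y0, y1, y2)) = k * (y0 ^ 2 - y1 * y2)"
    and g: "good T"
  shows "card T \<le> 8 \<and> (card T \<ge> 7 \<longrightarrow> (\<exists>g. \<not> is_unit g \<and> g dvd f2 \<and> g dvd f3)) \<and> (card T = 8 \<longrightarrow> f2 dvd f3)"
proof -
  have fin: "finite T" using g by (simp add: good_def)
  have T: "\<And>x. x \<in> T \<Longrightarrow> x \<noteq> (0, 0, 0) \<and> ev f2 x = 0 \<and> ev f3 x = 0"
    "\<And>x. x \<in> T \<Longrightarrow> x \<noteq> (0, 0, 0) \<and> ev f2 x = 0 \<and> ev f4 x = 0"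
    using g by (auto simp: good_def)
  have np: "\<And>x y. x \<in> T \<Longrightarrow> y \<in> T \<Longrightarrow> x \<noteq> y \<Longrightarrow> \<not> prop3 x y"
    using g by (auto simp: good_def)
  have cn: "cone (appl Mi x)" if "ev f2 x = 0" for x
  proof -
    obtain y0 y1 y2 where y: "appl Mi x = (y0, y1, y2)" by (rule v3_cases)
    have "k * (y0 ^ 2 - y1 * y2) = 0" using main[of y0 y1 y2] i2[of x] y that by simp
    thus ?thesis using k y by (simp add: cone_def)
  qed
  have nu: "\<not> is_unit f2"
  proof (rule not_unit_if_zero)
    show "ev f2 (0, 0, 0) = 0" using homog_scale[OF h2, of 0 "(0, 0, 0)"] by simp
  qed
  have c6: "card T \<le> 6" if nv: "\<not> vanish f3 (\<lambda>x. ev f2 x = 0)"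
  proof (rule ccontr)
    assume "\<not> card T \<le> 6"
    hence "card T > 3 * 2" by simp
    hence c: "card T > 3 * 2" .
    note CL[OF i2 cn h3 fin c T(1) np]
    hence "vanish f3 (\<lambda>x. ev f2 x = 0)" unfolding vanish_def by blast
    thus False using nv by simp
  qed
  have dv: "f2 dvd f3" if v: "vanish f3 (\<lambda>x. ev f2 x = 0)"
  proof -
    obtain a where "f3 = f2 * a" using DC[OF two i2 k main vanishD[OF v]] by blast
    thus ?thesis by simp
  qed
  have c8: "card T \<le> 8"
  proof (cases "vanish f3 (\<lambda>x. ev f2 x = 0)")
    case False thus ?thesis using c6 by simp
  next
    case True
    obtain a where a: "f3 = f2 * a" using DC[OF two i2 k main vanishD[OF True]] by blast
    show ?thesis
    proof (rule ccontr)
      assume "\<not> card T \<le> 8"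
      hence "card T > 4 * 2" by simp
      hence c: "card T > 4 * 2" .
      obtain b where b: "f4 = f2 * b" using DC[OF two i2 k main CL[OF i2 cn h4 fin c T(2) np]] by blast
      have "\<not> finite_sing (quartic f2 (f2 * a) (f2 * b))" by (rule SC[OF i1 main])
      thus False using isolated a b by simp
    qed
  qed
  have "card T \<ge> 7 \<longrightarrow> f2 dvd f3"
  proof
    assume "card T \<ge> 7"
    hence "vanish f3 (\<lambda>x. ev f2 x = 0)" using c6 by (cases "vanish f3 (\<lambda>x. ev f2 x = 0)") auto
    thus "f2 dvd f3" by (rule dv)
  qed
  thus ?thesis using c8 nu by auto
qed

lemma core:
  assumes g: "good T"
  shows "card T \<le> 8 \<and> (card T \<ge> 7 \<longrightarrow> (\<exists>g. \<not> is_unit g \<and> g dvd f2 \<and> g dvd f3)) \<and> (card T = 8 \<longrightarrow> f2 dvd f3)"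
proof -
  define a where "a = mcoeff3 f2 2 0 0"
  define b where "b = mcoeff3 f2 0 2 0"
  define c where "c = mcoeff3 f2 0 0 2"
  define d where "d = mcoeff3 f2 1 1 0"
  define e where "e = mcoeff3 f2 1 0 1"
  define f where "f = mcoeff3 f2 0 1 1"
  have q: "ev f2 x = qf a b c d e f x" for x unfolding a_def b_def c_def d_def e_def f_def by (rule f2_qf[OF h2])
  have nz: "\<not> (a = 0 \<and> b = 0 \<and> c = 0 \<and> d = 0 \<and> e = 0 \<and> f = 0)"
  proof
    assume z: "a = 0 \<and> b = 0 \<and> c = 0 \<and> d = 0 \<and> e = 0 \<and> f = 0"
    have "f2 = 0" by (rule ev_eqI) (use z q in \<open>simp add: qf_zero ev_split\<close>)
    thus False using f2_nz by simp
  qed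
  have C: "CONCL (qf a b c d e f)" by (rule classify[OF two nz])
  have qe: "qf a b c d e f = ev f2" using q by auto
  have C': "(\<exists>l m. l \<noteq> (0, 0, 0) \<and> m \<noteq> (0, 0, 0) \<and> (\<forall>x. ev f2 x = dot l x * dot m x)) \<or>
     (\<exists>M Mi k. k \<noteq> 0 \<and> (\<forall>y. appl Mi (appl M y) = y) \<and> (\<forall>x. appl M (appl Mi x) = x) \<and>
        (\<forall>y0 y1 y2. ev f2 (appl M (y0, y1, y2)) = k * (y0 ^ 2 - y1 * y2)))"
    using C unfolding CONCL_def qe .
  thus ?thesis
  proof (elim disjE exE conjE)
    fix l m assume a1: "l \<noteq> (0, 0, 0)" and a2: "m \<noteq> (0, 0, 0)" and a3: "\<forall>x. ev f2 x = dot l x * dot m x"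
    show ?thesis by (rule caseA[OF a1 a2 spec[OF a3] g])
  next
    fix M Mi k assume a1: "k \<noteq> 0" and a2: "\<forall>y. appl Mi (appl M y) = y" and a3: "\<forall>x. appl M (appl Mi x) = x"
      and a4: "\<forall>y0 y1 y2. ev f2 (appl M (y0, y1, y2)) = k * (y0 ^ 2 - y1 * y2)"
    show ?thesis by (rule caseB[OF a1 spec[OF a2] spec[OF a3] spec[OF spec[OF spec[OF a4]]] g])
  qed
qed

end


lemma char2_two:
  assumes "CHAR('k::field) \<noteq> 2" shows "(2::'k) \<noteq> 0"
proof
  assume "(2::'k) = 0"
  hence "of_nat 2 = (0::'k)" by simp
  hence d: "CHAR('k) dvd 2" by (simp only: of_nat_eq_0_iff_char_dvd)
  have "CHAR('k) \<le> 2" using dvd_imp_le[OF d] by simp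
  moreover have "CHAR('k) \<noteq> 0"
  proof
    assume "CHAR('k) = 0"
    with d show False by simp
  qed
  moreover have "CHAR('k) \<noteq> 1" using CHAR_not_1' by simp
  ultimately show False using assms by linarith
qed

definition lof :: "'k::idom v3 \<Rightarrow> 'k pt set" where
  "lof x = span2 P0 (ext4 x 0)"

lemma lin_comb_P0: "lin_comb s P0 t (a0, a1, a2, a3) = (t * a0, t * a1, t * a2, s + t * a3)"
  by (simp add: lin_comb_def P0_def)

lemma span2_P0: "span2 P0 (a0, a1, a2, a3::'k::idom) = {(t * a0, t * a1, t * a2, z) | z t. True}"
  unfolding span2_def lin_comb_P0
proof (intro set_eqI iffI)
  fix w :: "'k pt" assume "w \<in> {(t * a0, t * a1, t * a2, s + t * a3) |s t. True}"
  then obtain s t where "w = (t * a0, t * a1, t * a2, s + t * a3)" by blast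
  thus "w \<in> {(t * a0, t * a1, t * a2, z) |z t. True}" by blast
next
  fix w :: "'k pt" assume "w \<in> {(t * a0, t * a1, t * a2, z) |z t. True}"
  then obtain z t :: 'k where w: "w = (t * a0, t * a1, t * a2, z)" by blast
  hence "w = (t * a0, t * a1, t * a2, (z - t * a3) + t * a3)" by simp
  thus "w \<in> {(t * a0, t * a1, t * a2, s + t * a3) |s t. True}" by blast
qed

lemma lin_indep_P0: "lin_indep2 P0 (a0, a1, a2, a3) \<longleftrightarrow> (a0, a1, a2) \<noteq> (0, 0, (0::'k::idom))"
proof
  assume li: "lin_indep2 P0 (a0, a1, a2, a3)"
  show "(a0, a1, a2) \<noteq> (0, 0, 0)"
  proof
    assume "(a0, a1, a2) = (0, 0, 0)"
    hence "lin_comb (- a3) P0 1 (a0, a1, a2, a3) = (0, 0, 0, 0)" by (simp add: lin_comb_P0)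
    thus False using li unfolding lin_indep2_def by fastforce
  qed
next
  assume nz: "(a0, a1, a2) \<noteq> (0, 0, 0)"
  show "lin_indep2 P0 (a0, a1, a2, a3)" unfolding lin_indep2_def
  proof (intro allI impI)
    fix s t assume "lin_comb s P0 t (a0, a1, a2, a3) = (0, 0, 0, 0)"
    hence e: "t * a0 = 0" "t * a1 = 0" "t * a2 = 0" "s + t * a3 = 0" by (simp_all add: lin_comb_P0)
    have "t = 0" using e(1-3) nz by auto
    thus "s = 0 \<and> t = 0" using e(4) by simp
  qed
qed

context qctx
begin

definition Z :: "'k v3 set" where
  "Z = {x. x \<noteq> (0, 0, 0) \<and> ev f2 x = 0 \<and> ev f3 x = 0 \<and> ev f4 x = 0}"

lemma vanish_line:
  "(\<forall>z t. eval4 (quartic f2 f3 f4) (t * a0, t * a1, t * a2, z) = 0) \<longleftrightarrow>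
     (ev f2 (a0, a1, a2) = 0 \<and> ev f3 (a0, a1, a2) = 0 \<and> ev f4 (a0, a1, a2) = 0)"
proof
  assume h: "\<forall>z t. eval4 (quartic f2 f3 f4) (t * a0, t * a1, t * a2, z) = 0"
  define A where "A = ev f2 (a0, a1, a2)"
  define B where "B = ev f3 (a0, a1, a2)"
  define C where "C = ev f4 (a0, a1, a2)"
  have e: "z ^ 2 * A + z * B + C = 0" for z
    using spec[OF spec[OF h, of z], of 1] unfolding eval4_quartic by (simp add: A_def B_def C_def)
  have C0: "C = 0" using e[of 0] by simp
  have "A + B = 0" using e[of 1] C0 by simp
  moreover have "A - B = 0" using e[of "-1"] C0 by simp
  ultimately have "2 * A = 0" by (simp add: algebra_simps)
  hence A0: "A = 0" using two by simp
  hence "B = 0" using \<open>A + B = 0\<close> by simp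
  thus "ev f2 (a0, a1, a2) = 0 \<and> ev f3 (a0, a1, a2) = 0 \<and> ev f4 (a0, a1, a2) = 0"
    using A0 C0 by (simp add: A_def B_def C_def)
next
  assume h: "ev f2 (a0, a1, a2) = 0 \<and> ev f3 (a0, a1, a2) = 0 \<and> ev f4 (a0, a1, a2) = 0"
  show "\<forall>z t. eval4 (quartic f2 f3 f4) (t * a0, t * a1, t * a2, z) = 0"
  proof (intro allI)
    fix z t
    have "ev f2 (sc t (a0, a1, a2)) = 0" "ev f3 (sc t (a0, a1, a2)) = 0" "ev f4 (sc t (a0, a1, a2)) = 0"
      using homog_scale[OF h2, of t "(a0, a1, a2)"] homog_scale[OF h3, of t "(a0, a1, a2)"]
        homog_scale[OF h4, of t "(a0, a1, a2)"] h by simp_all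
    thus "eval4 (quartic f2 f3 f4) (t * a0, t * a1, t * a2, z) = 0" unfolding eval4_quartic by simp
  qed
qed

lemma lines_eq: "lines_through_P (quartic f2 f3 f4) = lof ` Z"
proof (intro set_eqI iffI)
  fix L assume "L \<in> lines_through_P (quartic f2 f3 f4)"
  then obtain u where L: "L = span2 P0 u" and li: "lin_indep2 P0 u"
    and v: "\<forall>w\<in>span2 P0 u. eval4 (quartic f2 f3 f4) w = 0"
    unfolding lines_through_P_def by blast
  obtain a0 a1 a2 a3 where u: "u = (a0, a1, a2, a3)" by (cases u) auto
  have nz: "(a0, a1, a2) \<noteq> (0, 0, 0)" using li unfolding u lin_indep_P0 .
  have L2: "L = lof (a0, a1, a2)" unfolding L u lof_def ext4_def
    by (simp add: span2_P0)
  have "\<forall>z t. eval4 (quartic f2 f3 f4) (t * a0, t * a1, t * a2, z) = 0"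
    using v unfolding u span2_P0 by blast
  hence "(a0, a1, a2) \<in> Z" using nz vanish_line unfolding Z_def by blast
  thus "L \<in> lof ` Z" using L2 by blast
next
  fix L assume "L \<in> lof ` Z"
  then obtain x where x: "x \<in> Z" and L: "L = lof x" by blast
  obtain a0 a1 a2 where xx: "x = (a0, a1, a2)" by (rule v3_cases)
  have u: "ext4 x 0 = (a0, a1, a2, 0)" by (simp add: xx ext4_def)
  have li: "lin_indep2 P0 (ext4 x 0)" unfolding u lin_indep_P0 using x by (simp add: xx Z_def)
  have "\<forall>z t. eval4 (quartic f2 f3 f4) (t * a0, t * a1, t * a2, z) = 0"
    using vanish_line x unfolding xx Z_def by blast
  hence "\<forall>w\<in>span2 P0 (ext4 x 0). eval4 (quartic f2 f3 f4) w = 0" unfolding u span2_P0 by blast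
  thus "L \<in> lines_through_P (quartic f2 f3 f4)" unfolding lines_through_P_def L lof_def using li by blast
qed

lemma lof_prop: fixes x y :: "'k v3" assumes "prop3 x y" "y \<noteq> (0, 0, 0)" shows "lof x = lof y"
proof -
  obtain c where c: "y = sc c x" using assms(1) by (auto simp: prop3_def)
  obtain a0 a1 a2 where xx: "x = (a0, a1, a2)" by (rule v3_cases)
  have c0: "c \<noteq> 0" using assms(2) c xx by auto
  have "{(t * a0, t * a1, t * a2, z) | z t. True} = {(t * (c * a0), t * (c * a1), t * (c * a2), z) | z t. True}"
  proof (intro set_eqI iffI)
    fix w assume "w \<in> {(t * a0, t * a1, t * a2, z) | z t. True}"
    then obtain z t where "w = (t * a0, t * a1, t * a2, z)" by blast
    hence "w = ((t / c) * (c * a0), (t / c) * (c * a1), (t / c) * (c * a2), z)" using c0 by simp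
    thus "w \<in> {(t * (c * a0), t * (c * a1), t * (c * a2), z) | z t. True}" by blast
  next
    fix w assume "w \<in> {(t * (c * a0), t * (c * a1), t * (c * a2), z) | z t. True}"
    then obtain z t where "w = (t * (c * a0), t * (c * a1), t * (c * a2), z)" by blast
    hence "w = ((t * c) * a0, (t * c) * a1, (t * c) * a2, z)" by (simp add: mult.assoc)
    thus "w \<in> {(t * a0, t * a1, t * a2, z) | z t. True}" by blast
  qed
  thus ?thesis unfolding lof_def c xx ext4_def by (simp add: span2_P0)
qed

lemma final:
  "finite (lines_through_P (quartic f2 f3 f4))
   \<and> card (lines_through_P (quartic f2 f3 f4)) \<le> 8
   \<and> (card (lines_through_P (quartic f2 f3 f4)) > 6 \<longrightarrow> (\<exists>g. \<not> is_unit g \<and> g dvd f2 \<and> g dvd f3))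
   \<and> (card (lines_through_P (quartic f2 f3 f4)) = 8 \<longrightarrow> f2 dvd f3)"
proof -
  define Ls where "Ls = lines_through_P (quartic f2 f3 f4)"
  define rep where "rep L = (SOME x. x \<in> Z \<and> L = lof x)" for L
  have rep: "rep L \<in> Z \<and> L = lof (rep L)" if "L \<in> Ls" for L
  proof -
    have "\<exists>x. x \<in> Z \<and> L = lof x" using that lines_eq unfolding Ls_def by blast
    thus ?thesis unfolding rep_def by (rule someI_ex)
  qed
  have sub: "good (rep ` Lf) \<and> card (rep ` Lf) = card Lf" if Lf: "Lf \<subseteq> Ls" "finite Lf" for Lf
  proof -
    have inj: "inj_on rep Lf"
    proof (rule inj_onI)
      fix L1 L2 assume "L1 \<in> Lf" "L2 \<in> Lf" "rep L1 = rep L2"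
      thus "L1 = L2" using rep Lf(1) by (metis subsetD)
    qed
    have g1: "\<forall>x\<in>rep ` Lf. x \<noteq> (0, 0, 0) \<and> ev f2 x = 0 \<and> ev f3 x = 0 \<and> ev f4 x = 0"
    proof
      fix x assume "x \<in> rep ` Lf"
      then obtain L where "L \<in> Lf" "x = rep L" by blast
      hence "x \<in> Z" using rep Lf(1) by blast
      thus "x \<noteq> (0, 0, 0) \<and> ev f2 x = 0 \<and> ev f3 x = 0 \<and> ev f4 x = 0" by (simp add: Z_def)
    qed
    have g2: "\<forall>x\<in>rep ` Lf. \<forall>y\<in>rep ` Lf. x \<noteq> y \<longrightarrow> \<not> prop3 x y"
    proof (intro ballI impI)
      fix x y assume x: "x \<in> rep ` Lf" and y: "y \<in> rep ` Lf" and xy: "x \<noteq> y"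
      obtain L1 where L1: "L1 \<in> Lf" "x = rep L1" using x by blast
      obtain L2 where L2: "L2 \<in> Lf" "y = rep L2" using y by blast
      show "\<not> prop3 x y"
      proof
        assume p: "prop3 x y"
        have "y \<in> Z" using rep L2 Lf(1) by blast
        hence "y \<noteq> (0, 0, 0)" by (simp add: Z_def)
        hence "lof x = lof y" by (rule lof_prop[OF p])
        hence "L1 = L2" using rep L1 L2 Lf(1) by (metis subsetD)
        thus False using xy L1 L2 by simp
      qed
    qed
    have "good (rep ` Lf)" unfolding good_def using g1 g2 Lf(2) by blast
    thus ?thesis using inj by (simp add: card_image)
  qed
  have fin: "finite Ls"
  proof (rule ccontr)
    assume "\<not> finite Ls"
    then obtain Lf where Lf: "finite Lf" "card Lf = 9" "Lf \<subseteq> Ls"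
      using infinite_arbitrarily_large by blast
    have "good (rep ` Lf)" "card (rep ` Lf) = 9" using sub[OF Lf(3) Lf(1)] Lf(2) by auto
    thus False using core[of "rep ` Lf"] by simp
  qed
  have g: "good (rep ` Ls)" and c: "card (rep ` Ls) = card Ls" using sub[OF _ fin] by auto
  have "card (rep ` Ls) \<le> 8 \<and> (card (rep ` Ls) \<ge> 7 \<longrightarrow> (\<exists>g. \<not> is_unit g \<and> g dvd f2 \<and> g dvd f3))
        \<and> (card (rep ` Ls) = 8 \<longrightarrow> f2 dvd f3)" by (rule core[OF g])
  thus ?thesis using fin c unfolding Ls_def[symmetric] by auto
qed

end


theorem lemma1p7:
  fixes f2 f3 f4 :: "'k::alg_closed_field pol3"
  assumes char2: "CHAR('k) \<noteq> 2" and char3: "CHAR('k) \<noteq> 3"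
    and h2: "homogeneous3 2 f2" and h3: "homogeneous3 3 f3" and h4: "homogeneous3 4 f4"
    and f2_nz: "f2 \<noteq> 0"
    and isolated: "finite_sing (quartic f2 f3 f4)"
    and double: "\<forall>w\<in>sing_vecs (quartic f2 f3 f4). double_point (quartic f2 f3 f4) w"
  shows "finite (lines_through_P (quartic f2 f3 f4))
         \<and> card (lines_through_P (quartic f2 f3 f4)) \<le> 8
         \<and> (card (lines_through_P (quartic f2 f3 f4)) > 6 \<longrightarrow>
              (\<exists>g. \<not> is_unit g \<and> g dvd f2 \<and> g dvd f3))
         \<and> (card (lines_through_P (quartic f2 f3 f4)) = 8 \<longrightarrow> f2 dvd f3)"
proof -
  have two: "(2::'k) \<noteq> 0" by (rule char2_two[OF char2])
  interpret qctx f2 f3 f4 using two h2 h3 h4 f2_nz isolated by unfold_locales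
  show ?thesis by (rule final)
qed

end
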